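(* Consider the closed-loop system $$\dot X(t)=f\big(X(t),u(0,t)\big),\quad u_t(x,t)=v\big(u(x,t)\big)u_x(x,t),\quad u(1,t)=\kappa\big(p(1,t)\big),$$ with $p(x,t)=X(t)+\int_0^x f(p(y,t),u(y,t))\Gamma(u(y,t),u_y(y,t),y)\,dy$, $\Gamma(u,u_x,x)=\frac{1}{v(u)}-\frac{x v'(u)u_x}{v(u)^2}$, under Assumptions (A1)–(A3) below, let $M>0$ be fixed, and define $w(x,t)=u(x,t)-\kappa(p(x,t))$, $$\Omega(t)=|X(t)|+\|u(t)\|_\infty+\|u_x(t)\|_\infty,\qquad \Omega_w(t)=|X(t)|+\|w(t)\|_\infty+\|w_x(t)\|_\infty.$$ There exist class $\mathcal{K}_\infty$ functions $\rho_3,\rho_4$ such that for all solutions of the closed-loop system satisfying $$-M<\frac{v'\big(u(x,t)\big)u_x(x,t)}{v\big(u(x,t)\big)}<1\quad\text{for all }x\in[0,1],\ t\ge0,$$ the following hold for all $t\ge0$: $\Omega_w(t)\le\rho_3(\Omega(t))$ and $\Omega(t)\le\rho_4(\Omega_w(t))$.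
   Context: $X(t)\in\mathbb{R}^n$, $u(x,t)\in\mathbb{R}$, $x\in[0,1]$, $t\ge0$; $f:\mathbb{R}^n\times\mathbb{R}\to\mathbb{R}^n$ is continuously differentiable with $f(0,0)=0$. (A1) $v:\mathbb{R}\to\mathbb{R}_+$ is twice continuously differentiable and $v(u)\ge\underline v>0$ for all $u$. (A2) $\dot X=f(X,\omega)$ is strongly forward complete w.r.t. $\omega$: there exist smooth $R:\mathbb{R}^n\to\mathbb{R}_+$ and class $\mathcal{K}_\infty$ functions $\alpha_1,\alpha_2,\alpha_3$ with $\alpha_1(|X|)\le R(X)\le\alpha_2(|X|)$, $\frac{\partial R}{\partial X}f(X,\omega)\le R(X)+\alpha_3(|\omega|)$. (A3) $\kappa:\mathbb{R}^n\to\mathbb{R}$ is twice continuously differentiable, $\kappa(0)=0$, and $\dot X=f(X,\kappa(X)+\omega)$ is input-to-state stable w.r.t. $\omega$. Solutions are continuously differentiable functions $X$, $u$ satisfying the closed-loop equations. For scalar $g(\cdot,t)$, $\|g(t)\|_\infty=\max_{x\in[0,1]}|g(x,t)|$; $|\cdot|$ is the Euclidean norm. *)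

theory Defs
  imports "HOL-Analysis.Analysis"
begin

definition class_K :: "(real \<Rightarrow> real) \<Rightarrow> bool" where
  "class_K \<gamma> \<longleftrightarrow> continuous_on {0..} \<gamma> \<and> \<gamma> 0 = 0 \<and> strict_mono_on {0..} \<gamma>"

definition class_K_inf :: "(real \<Rightarrow> real) \<Rightarrow> bool" where
  "class_K_inf \<gamma> \<longleftrightarrow> class_K \<gamma> \<and> filterlim \<gamma> at_top at_top"

definition class_KL :: "(real \<Rightarrow> real \<Rightarrow> real) \<Rightarrow> bool" where
  "class_KL \<beta> \<longleftrightarrow>
     continuous_on ({0..} \<times> {0..}) (\<lambda>(r, s). \<beta> r s) \<and>
     (\<forall>s\<ge>0. class_K (\<lambda>r. \<beta> r s)) \<and>
     (\<forall>r\<ge>0. antimono_on {0..} (\<beta> r) \<and> ((\<beta> r) \<longlongrightarrow> 0) at_top)"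

definition C1_on :: "'a::real_normed_vector set \<Rightarrow> ('a \<Rightarrow> 'b::real_normed_vector) \<Rightarrow> bool" where
  "C1_on S g \<longleftrightarrow> (\<exists>g'. (\<forall>z\<in>S. (g has_derivative blinfun_apply (g' z)) (at z)) \<and> continuous_on S g')"

definition C2_on :: "'a::real_normed_vector set \<Rightarrow> ('a \<Rightarrow> 'b::real_normed_vector) \<Rightarrow> bool" where
  "C2_on S g \<longleftrightarrow> (\<exists>g'. (\<forall>z\<in>S. (g has_derivative blinfun_apply (g' z)) (at z)) \<and> C1_on S g')"

definition sup_on :: "real set \<Rightarrow> (real \<Rightarrow> real) \<Rightarrow> real" where
  "sup_on A g = (SUP s\<in>A. \<bar>g s\<bar>)"

definition ISS :: "('a::euclidean_space \<Rightarrow> real \<Rightarrow> 'a) \<Rightarrow> bool" where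
  "ISS g \<longleftrightarrow> (\<exists>\<beta> \<gamma>. class_KL \<beta> \<and> class_K \<gamma> \<and>
     (\<forall>X \<omega>. continuous_on {0..} \<omega> \<longrightarrow>
        (\<forall>t\<ge>0. (X has_vector_derivative g (X t) (\<omega> t)) (at t within {0..})) \<longrightarrow>
        (\<forall>t\<ge>0. norm (X t) \<le> \<beta> (norm (X 0)) t + \<gamma> (sup_on {0..t} \<omega>))))"

definition strongly_forward_complete :: "('a::euclidean_space \<Rightarrow> real \<Rightarrow> 'a) \<Rightarrow> bool" where
  "strongly_forward_complete g \<longleftrightarrow>
     (\<exists>R R' \<alpha>1 \<alpha>2 \<alpha>3. class_K_inf \<alpha>1 \<and> class_K_inf \<alpha>2 \<and> class_K_inf \<alpha>3 \<and>
        C1_on UNIV R \<and> (\<forall>X. (R has_derivative R' X) (at X)) \<and>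
        (\<forall>X. 0 \<le> R X \<and> \<alpha>1 (norm X) \<le> R X \<and> R X \<le> \<alpha>2 (norm X)) \<and>
        (\<forall>X \<omega>. R' X (g X \<omega>) \<le> R X + \<alpha>3 \<bar>\<omega>\<bar>))"

definition Gamma :: "(real \<Rightarrow> real) \<Rightarrow> real \<Rightarrow> real \<Rightarrow> real \<Rightarrow> real" where
  "Gamma v u ux x = 1 / v u - x * deriv v u * ux / (v u)\<^sup>2"

definition Dom :: "(real \<times> real) set" where
  "Dom = {0..1} \<times> {0..}"

definition closed_loop_solution ::
  "('a::euclidean_space \<Rightarrow> real \<Rightarrow> 'a) \<Rightarrow> (real \<Rightarrow> real) \<Rightarrow> ('a \<Rightarrow> real) \<Rightarrow>
   (real \<Rightarrow> 'a) \<Rightarrow> (real \<Rightarrow> real \<Rightarrow> real) \<Rightarrow> (real \<Rightarrow> real \<Rightarrow> real) \<Rightarrow>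
   (real \<Rightarrow> real \<Rightarrow> real) \<Rightarrow> (real \<Rightarrow> real \<Rightarrow> 'a) \<Rightarrow> bool" where
  "closed_loop_solution f v \<kappa> X u ux ut p \<longleftrightarrow>
     (\<forall>t\<ge>0. (X has_vector_derivative f (X t) (u 0 t)) (at t within {0..})) \<and>
     continuous_on {0..} (\<lambda>t. f (X t) (u 0 t)) \<and>
     continuous_on Dom (\<lambda>(x, t). u x t) \<and>
     continuous_on Dom (\<lambda>(x, t). ux x t) \<and>
     continuous_on Dom (\<lambda>(x, t). ut x t) \<and>
     (\<forall>x\<in>{0..1}. \<forall>t\<ge>0. ((\<lambda>y. u y t) has_real_derivative ux x t) (at x within {0..1})) \<and>
     (\<forall>x\<in>{0..1}. \<forall>t\<ge>0. ((\<lambda>s. u x s) has_real_derivative ut x t) (at t within {0..})) \<and>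
     (\<forall>x\<in>{0..1}. \<forall>t\<ge>0. ut x t = v (u x t) * ux x t) \<and>
     (\<forall>t\<ge>0. u 1 t = \<kappa> (p 1 t)) \<and>
     (\<forall>x\<in>{0..1}. \<forall>t\<ge>0. p x t = X t +
        integral {0..x} (\<lambda>y. Gamma v (u y t) (ux y t) y *\<^sub>R f (p y t) (u y t)))"

definition supnorm01 :: "(real \<Rightarrow> real) \<Rightarrow> real" where
  "supnorm01 g = (SUP x\<in>{0..1}. \<bar>g x\<bar>)"

end

theory Submission
  imports Defs
begin

lemma has_vector_derivative_Un:
  assumes "(f has_vector_derivative f') (at x within S)"
    and "(f has_vector_derivative f') (at x within T)"
  shows "(f has_vector_derivative f') (at x within (S \<union> T))"
  using assms unfolding has_vector_derivative_def has_derivative_within Lim_within_Un by blast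

lemma R_growth:
  fixes Y :: "real \<Rightarrow> 'a::real_normed_vector" and R :: "'a \<Rightarrow> real"
  assumes T: "0 \<le> T"
    and dY: "\<And>s. s \<in> {0..T} \<Longrightarrow> (Y has_vector_derivative Y' s) (at s within {0..T})"
    and dR: "\<And>x. (R has_derivative R' x) (at x)"
    and ineq: "\<And>s. s \<in> {0..T} \<Longrightarrow> R' (Y s) (Y' s) \<le> G * (R (Y s) + A)"
  shows "R (Y T) + A \<le> exp (G * T) * (R (Y 0) + A)"
proof -
  define h where "h s = exp (-G* s) * (R (Y s) + A)" for s
  define h' where "h' s = exp (-G* s) * R' (Y s) (Y' s) - G * exp (-G* s) * (R (Y s) + A)" for s
  have dRY: "((\<lambda>s. R (Y s)) has_real_derivative R' (Y s) (Y' s)) (at s within {0..T})"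
    if "s \<in> {0..T}" for s
  proof -
    have lin: "linear (R' (Y s))" using dR has_derivative_bounded_linear bounded_linear.linear by blast
    have "((R \<circ> Y) has_derivative (R' (Y s) \<circ> (\<lambda>h. h *\<^sub>R Y' s))) (at s within {0..T})"
      apply (rule diff_chain_within)
      using dY[OF that] apply (simp add: has_vector_derivative_def)
      using dR has_derivative_at_withinI by blast
    moreover have "(R' (Y s) \<circ> (\<lambda>h. h *\<^sub>R Y' s)) = (\<lambda>h. R' (Y s) (Y' s) * h)"
      using linear_scale[OF lin] by (auto simp: fun_eq_iff)
    ultimately show ?thesis by (simp add: has_field_derivative_def o_def)
  qed
  have dh: "(h has_real_derivative h' s) (at s within {0..T})" if "s \<in> {0..T}" for s
    unfolding h_def h'_def
    by (rule derivative_eq_intros dRY[OF that] | simp add: algebra_simps)+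
  have "h T \<le> h 0"
  proof (rule DERIV_nonpos_imp_decreasing_open[OF T])
    fix x assume x: "0 < x" "x < T"
    have "(h has_real_derivative h' x) (at x)"
      using dh[of x] x by (simp add: at_within_Icc_at)
    moreover have "h' x \<le> 0"
    proof -
      have "exp (-G*x) * R' (Y x) (Y' x) \<le> exp (-G*x) * (G * (R (Y x) + A))"
        using ineq[of x] x by (intro mult_left_mono) auto
      then show ?thesis unfolding h'_def by (simp add: algebra_simps)
    qed
    ultimately show "\<exists>y. (h has_real_derivative y) (at x) \<and> y \<le> 0" by blast
  next
    show "continuous_on {0..T} h"
      using dh by (meson DERIV_continuous continuous_on_eq_continuous_within)
  qed
  then have 1: "exp (- (G * T)) * (R (Y T) + A) \<le> R (Y 0) + A" by (simp add: h_def)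
  have 2: "exp (G * T) * exp (- (G * T)) = 1" by (simp flip: exp_add)
  have "R (Y T) + A = exp (G * T) * (exp (- (G * T)) * (R (Y T) + A))"
    using 2 by (simp add: mult.assoc[symmetric])
  also have "\<dots> \<le> exp (G * T) * (R (Y 0) + A)"
    using 1 by (intro mult_left_mono) auto
  finally show ?thesis .
qed


lemma picard_unit:
  fixes g :: "'a::euclidean_space \<Rightarrow> 'a"
  assumes L: "L > 0" and lip: "\<And>x y. norm (g x - g y) \<le> L * norm (x - y)"
  shows "\<exists>Y::real \<Rightarrow> 'a. continuous_on {0..1} Y \<and> (\<forall>t\<in>{0..1}. Y t = y0 + integral {0..t} (\<lambda>s. g (Y s)))"
proof -
  define k where "k = 2 * L"
  have k: "k > 0" using L by (simp add: k_def)
  define cl :: "real \<Rightarrow> real" where "cl t = max 0 (min 1 t)" for t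
  have cl_cont: "continuous_on UNIV cl" unfolding cl_def by (intro continuous_intros)
  have cl_range: "cl t \<in> {0..1}" for t by (simp add: cl_def)
  have cl_id: "t \<in> {0..1} \<Longrightarrow> cl t = t" for t by (simp add: cl_def)
  have gcont: "continuous_on UNIV g"
  proof -
    have "L-lipschitz_on UNIV g" using L lip by (auto simp: lipschitz_on_def dist_norm)
    then show ?thesis by (rule lipschitz_on_continuous_on)
  qed
  define hZ :: "(real \<Rightarrow>\<^sub>C 'a) \<Rightarrow> real \<Rightarrow> 'a" where "hZ Z s = g (exp (k * s) *\<^sub>R Z s)" for Z s
  have hZ_cont: "continuous_on S (hZ Z)" for Z S
    unfolding hZ_def
    by (rule continuous_on_compose2[OF gcont]) (auto intro!: continuous_intros)
  have hZ_int: "hZ Z integrable_on {a..b}" for Z a b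
    by (rule integrable_continuous_real[OF hZ_cont])
  define F0 where "F0 Z \<tau> = exp (- (k * \<tau>)) *\<^sub>R (y0 + integral {0..\<tau>} (hZ Z))" for Z \<tau>
  define FZ where "FZ Z t = F0 Z (cl t)" for Z t
  have F0_cont: "continuous_on {0..1} (F0 Z)" for Z
    unfolding F0_def
    by (intro continuous_intros indefinite_integral_continuous_1 hZ_int)
  have FZ_bc: "FZ Z \<in> bcontfun" for Z
  proof -
    have "continuous_on UNIV (FZ Z)"
      unfolding FZ_def
      by (rule continuous_on_compose2[OF F0_cont[of Z] cl_cont]) (use cl_range in auto)
    moreover have "bounded (range (FZ Z))"
    proof (rule bounded_subset)
      show "bounded (F0 Z ` {0..1})"
        by (intro compact_imp_bounded compact_continuous_image F0_cont) auto
      show "range (FZ Z) \<subseteq> F0 Z ` {0..1}" using cl_range by (auto simp: FZ_def)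
    qed
    ultimately show ?thesis by (simp add: bcontfun_def)
  qed
  define \<Phi> where "\<Phi> Z = Bcontfun (FZ Z)" for Z
  have \<Phi>_apply: "apply_bcontfun (\<Phi> Z) = FZ Z" for Z
    unfolding \<Phi>_def using FZ_bc by (simp add: Bcontfun_inverse)
  have contr: "dist (\<Phi> Z1) (\<Phi> Z2) \<le> 1/2 * dist Z1 Z2" for Z1 Z2
  proof (rule dist_bound)
    fix t
    define D where "D = dist Z1 Z2"
    define \<tau> where "\<tau> = cl t"
    have \<tau>: "0 \<le> \<tau>" "\<tau> \<le> 1" using cl_range[of t] by (auto simp: \<tau>_def)
    have D0: "D \<ge> 0" by (simp add: D_def)
    have pt: "norm (hZ Z1 s - hZ Z2 s) \<le> L * D * exp (k * s)" for s
    proof -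
      have "norm (hZ Z1 s - hZ Z2 s) \<le> L * norm (exp (k * s) *\<^sub>R Z1 s - exp (k * s) *\<^sub>R Z2 s)"
        unfolding hZ_def by (rule lip)
      also have "\<dots> = L * exp (k * s) * dist (Z1 s) (Z2 s)"
        by (simp add: dist_norm scaleR_diff_right[symmetric])
      also have "\<dots> \<le> L * exp (k * s) * D"
        unfolding D_def using L by (intro mult_left_mono dist_bounded) auto
      finally show ?thesis by (simp add: algebra_simps)
    qed
    have exi: "((\<lambda>s. L * D * exp (k * s)) has_integral (L * D * exp (k * \<tau>) / k - L * D * exp (k * 0) / k)) {0..\<tau>}"
    proof (rule fundamental_theorem_of_calculus[OF \<tau>(1)])
      fix x assume "x \<in> {0..\<tau>}"
      show "((\<lambda>s. L * D * exp (k * s) / k) has_vector_derivative L * D * exp (k * x)) (at x within {0..\<tau>})"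
        unfolding has_real_derivative_iff_has_vector_derivative[symmetric]
        using k by (auto intro!: derivative_eq_intros)
    qed
    have "norm (integral {0..\<tau>} (\<lambda>s. hZ Z1 s - hZ Z2 s)) \<le> integral {0..\<tau>} (\<lambda>s. L * D * exp (k * s))"
      by (rule Henstock_Kurzweil_Integration.integral_norm_bound_integral)
         (use exi pt in \<open>auto intro!: integrable_diff hZ_int\<close>)
    also have "\<dots> = L * D * exp (k * \<tau>) / k - L * D * exp (k * 0) / k"
      by (rule integral_unique[OF exi])
    also have "\<dots> = L * D * (exp (k * \<tau>) - 1) / k"
      by (simp add: diff_divide_distrib right_diff_distrib)
    finally have I: "norm (integral {0..\<tau>} (hZ Z1) - integral {0..\<tau>} (hZ Z2)) \<le> L * D * (exp (k * \<tau>) - 1) / k"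
      by (simp add: integral_diff hZ_int)
    have "dist (\<Phi> Z1 t) (\<Phi> Z2 t) = exp (- (k * \<tau>)) * norm (integral {0..\<tau>} (hZ Z1) - integral {0..\<tau>} (hZ Z2))"
      by (simp add: \<Phi>_apply FZ_def F0_def \<tau>_def[symmetric] dist_norm scaleR_diff_right[symmetric])
    also have "\<dots> \<le> exp (- (k * \<tau>)) * (L * D * (exp (k * \<tau>) - 1) / k)"
      by (intro mult_left_mono I) auto
    also have "\<dots> = D / 2 * (1 - exp (- (k * \<tau>)))"
      using L by (simp add: k_def field_simps exp_minus)
    also have "\<dots> \<le> D / 2" using D0 by (simp add: mult_left_le)
    finally show "dist (\<Phi> Z1 t) (\<Phi> Z2 t) \<le> 1/2 * dist Z1 Z2" by (simp add: D_def)
  qed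
  obtain Z where Z: "\<Phi> Z = Z"
    using banach_fix_type[of "1/2" \<Phi>] contr by auto
  define Y where "Y t = exp (k * cl t) *\<^sub>R Z t" for t
  have "continuous_on {0..1} Y"
    unfolding Y_def
    by (intro continuous_intros continuous_on_compose2[OF cl_cont]) auto
  moreover have "Y t = y0 + integral {0..t} (\<lambda>s. g (Y s))" if t: "t \<in> {0..1}" for t
  proof -
    have "Z t = FZ Z t" using Z \<Phi>_apply by metis
    then have "Y t = y0 + integral {0..t} (hZ Z)"
      using t by (simp add: Y_def FZ_def F0_def cl_id exp_minus)
    also have "integral {0..t} (hZ Z) = integral {0..t} (\<lambda>s. g (Y s))"
      by (rule integral_cong) (use t in \<open>auto simp: hZ_def Y_def cl_id\<close>)
    finally show ?thesis .
  qed
  ultimately show ?thesis by (intro exI[of _ Y]) auto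
qed

lemma ode_unit:
  fixes g :: "'a::euclidean_space \<Rightarrow> 'a" and R :: "'a \<Rightarrow> real"
  assumes loclip: "\<And>r. \<exists>L. \<forall>x\<in>cball 0 r. \<forall>y\<in>cball 0 r. norm (g x - g y) \<le> L * norm (x - y)"
    and dR: "\<And>x. (R has_derivative R' x) (at x)"
    and sub: "\<And>C. \<exists>\<rho>. \<forall>x. R x \<le> C \<longrightarrow> norm x < \<rho>"
    and bnd: "\<And>x. R' x (g x) \<le> R x + a"
    and a: "a \<ge> 0" and R0: "\<And>x. R x \<ge> 0"
  shows "\<exists>Y. Y 0 = y0 \<and> (\<forall>t\<in>{0..1}. (Y has_vector_derivative g (Y t)) (at t within {0..1}))"
proof -
  define C where "C = exp 1 * (R y0 + a)"
  obtain \<rho> where \<rho>: "\<And>x. R x \<le> C \<Longrightarrow> norm x < \<rho>" using sub by blast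
  have "R y0 \<le> C"
  proof -
    have "R y0 \<le> 1 * (R y0 + a)" using a by simp
    also have "\<dots> \<le> exp 1 * (R y0 + a)" using a R0[of y0] by (intro mult_right_mono) auto
    finally show ?thesis by (simp add: C_def)
  qed
  then have y0\<rho>: "norm y0 < \<rho>" by (rule \<rho>)
  define B where "B = cball (0::'a) \<rho>"
  have "0 \<le> \<rho>" using y0\<rho> norm_ge_zero[of y0] by linarith
  then have B: "convex B" "closed B" "B \<noteq> {}" by (auto simp: B_def)
  obtain L0 where L0: "\<And>x y. x \<in> B \<Longrightarrow> y \<in> B \<Longrightarrow> norm (g x - g y) \<le> L0 * norm (x - y)"
    using loclip[of \<rho>] unfolding B_def by blast
  define L where "L = max L0 1"
  define cp where "cp = closest_point B"
  have cpB: "cp x \<in> B" for x using closest_point_in_set[OF B(2,3)] by (simp add: cp_def)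
  have cp_id: "x \<in> B \<Longrightarrow> cp x = x" for x by (simp add: cp_def closest_point_self)
  have lip: "norm (g (cp x) - g (cp y)) \<le> L * norm (x - y)" for x y
  proof -
    have "norm (g (cp x) - g (cp y)) \<le> L0 * norm (cp x - cp y)" by (rule L0[OF cpB cpB])
    also have "\<dots> \<le> L * norm (cp x - cp y)" by (intro mult_right_mono) (auto simp: L_def)
    also have "norm (cp x - cp y) \<le> norm (x - y)"
      using closest_point_lipschitz[OF B, of x y] by (simp add: cp_def dist_norm)
    then have "L * norm (cp x - cp y) \<le> L * norm (x - y)" by (intro mult_left_mono) (auto simp: L_def)
    finally show ?thesis .
  qed
  have Lpos: "L > 0" by (simp add: L_def)
  obtain Y :: "real \<Rightarrow> 'a" where Yc: "continuous_on {0..1} Y"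
    and Yi': "\<forall>t\<in>{0..1}. Y t = y0 + integral {0..t} (\<lambda>s. g (cp (Y s)))"
    using picard_unit[OF Lpos lip, of y0] by blast
  have Yi: "\<And>t. t \<in> {0..1} \<Longrightarrow> Y t = y0 + integral {0..t} (\<lambda>s. g (cp (Y s)))"
    using Yi' by blast
  have gcp_cont: "continuous_on UNIV (\<lambda>x. g (cp x))"
  proof -
    have "L-lipschitz_on UNIV (\<lambda>x. g (cp x))" using lip by (auto simp: lipschitz_on_def dist_norm L_def)
    then show ?thesis by (rule lipschitz_on_continuous_on)
  qed
  have Y0: "Y 0 = y0" using Yi[of 0] by simp
  have dY: "(Y has_vector_derivative g (cp (Y t))) (at t within {0..1})" if t: "t \<in> {0..1}" for t
  proof (rule has_vector_derivative_transform[OF t])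
    show "Y x = y0 + integral {0..x} (\<lambda>s. g (cp (Y s)))" if "x \<in> {0..1}" for x using Yi that .
    have "continuous_on {0..1} (\<lambda>s. g (cp (Y s)))"
      by (rule continuous_on_compose2[OF gcp_cont Yc]) auto
    then show "((\<lambda>x. y0 + integral {0..x} (\<lambda>s. g (cp (Y s)))) has_vector_derivative g (cp (Y t))) (at t within {0..1})"
      using integral_has_vector_derivative[OF _ t] by (auto intro!: derivative_eq_intros)
  qed
  have inside: "norm (Y t) < \<rho>" if t: "t \<in> {0..1}" for t
  proof (rule ccontr)
    assume "\<not> norm (Y t) < \<rho>"
    define T where "T = {0..1} \<inter> (\<lambda>s. norm (Y s)) -` {\<rho>..}"
    have tT: "t \<in> T" using t \<open>\<not> norm (Y t) < \<rho>\<close> by (auto simp: T_def)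
    have clT: "closed T" unfolding T_def
      by (rule continuous_closed_preimage) (auto intro: continuous_intros Yc)
    define \<tau> where "\<tau> = Inf T"
    have bddT: "bdd_below T" by (rule bdd_belowI[of _ 0]) (auto simp: T_def)
    have \<tau>T: "\<tau> \<in> T" unfolding \<tau>_def using closed_contains_Inf[OF _ bddT clT] tT by blast
    have \<tau>01: "\<tau> \<in> {0..1}" using \<tau>T by (auto simp: T_def)
    have \<tau>pos: "0 < \<tau>"
    proof (rule ccontr)
      assume "\<not> 0 < \<tau>" then have "\<tau> = 0" using \<tau>01 by auto
      then show False using \<tau>T Y0 y0\<rho> by (auto simp: T_def)
    qed
    have below: "norm (Y s) < \<rho>" if "s \<in> {0..<\<tau>}" for s
    proof (rule ccontr)
      assume "\<not> norm (Y s) < \<rho>"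
      then have "s \<in> T" using that \<tau>01 by (auto simp: T_def)
      then have "\<tau> \<le> s" unfolding \<tau>_def by (rule cInf_lower[OF _ bddT])
      then show False using that by auto
    qed
    define K where "K = {0..1} \<inter> (\<lambda>s. norm (Y s)) -` {..\<rho>}"
    have clK: "closed K" unfolding K_def
      by (rule continuous_closed_preimage) (auto intro: continuous_intros Yc)
    have "{0..<\<tau>} \<subseteq> K" using below \<tau>01 by (auto simp: K_def less_imp_le)
    then have "closure {0..<\<tau>} \<subseteq> K" using clK closure_minimal by blast
    then have inK: "{0..\<tau>} \<subseteq> K" using \<tau>pos by simp
    have inB: "s \<in> {0..\<tau>} \<Longrightarrow> Y s \<in> B" for s using inK by (auto simp: K_def B_def)
    have "R (Y \<tau>) + a \<le> exp (1 * \<tau>) * (R (Y 0) + a)"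
    proof (rule R_growth[where Y'="\<lambda>s. g (Y s)" and R'=R'])
      show "0 \<le> \<tau>" using \<tau>pos by simp
      fix s assume s: "s \<in> {0..\<tau>}"
      have "(Y has_vector_derivative g (cp (Y s))) (at s within {0..\<tau>})"
        by (rule has_vector_derivative_within_subset[OF dY]) (use s \<tau>01 in auto)
      then show "(Y has_vector_derivative g (Y s)) (at s within {0..\<tau>})"
        using cp_id[OF inB[OF s]] by simp
      show "R' (Y s) (g (Y s)) \<le> 1 * (R (Y s) + a)" using bnd by simp
    qed (rule dR)
    also have "\<dots> \<le> exp 1 * (R y0 + a)"
      unfolding Y0 using \<tau>01 a R0[of y0] by (intro mult_right_mono) auto
    finally have "R (Y \<tau>) \<le> C" using a by (simp add: C_def)
    then have "norm (Y \<tau>) < \<rho>" by (rule \<rho>)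
    then show False using \<tau>T by (auto simp: T_def)
  qed
  show ?thesis
  proof (intro exI conjI ballI)
    show "Y 0 = y0" by (rule Y0)
    fix t :: real assume t: "t \<in> {0..1}"
    have "Y t \<in> B" using inside[OF t] by (simp add: B_def)
    then show "(Y has_vector_derivative g (Y t)) (at t within {0..1})" using dY[OF t] cp_id by simp
  qed
qed

lemma shift_deriv:
  fixes Y :: "real \<Rightarrow> 'a::real_normed_vector"
  assumes "(Y has_vector_derivative D) (at (t - c) within {0..1})" "t \<in> {c..c+1}"
  shows "((\<lambda>s. Y (s - c)) has_vector_derivative D) (at t within {c..c+1})"
proof -
  have im: "(\<lambda>s. s - c) ` {c..c+1} = {0..1}"
  proof
    show "(\<lambda>s. s - c) ` {c..c+1} \<subseteq> {0..1}" by auto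
    show "{0..1} \<subseteq> (\<lambda>s. s - c) ` {c..c+1}"
    proof
      fix x :: real assume "x \<in> {0..1}"
      then show "x \<in> (\<lambda>s. s - c) ` {c..c+1}" by (intro image_eqI[of _ _ "x + c"]) auto
    qed
  qed
  have "((\<lambda>s. s - c) has_vector_derivative 1) (at t within {c..c+1})"
    by (auto intro!: derivative_eq_intros simp: has_real_derivative_iff_has_vector_derivative[symmetric])
  from vector_diff_chain_within[OF this, of Y D] assms(1) im
  show ?thesis by (simp add: o_def)
qed

lemma ode_global:
  fixes g :: "'a::euclidean_space \<Rightarrow> 'a" and R :: "'a \<Rightarrow> real"
  assumes loclip: "\<And>r. \<exists>L. \<forall>x\<in>cball 0 r. \<forall>y\<in>cball 0 r. norm (g x - g y) \<le> L * norm (x - y)"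
    and dR: "\<And>x. (R has_derivative R' x) (at x)"
    and sub: "\<And>C. \<exists>\<rho>. \<forall>x. R x \<le> C \<longrightarrow> norm x < \<rho>"
    and bnd: "\<And>x. R' x (g x) \<le> R x + a"
    and a: "a \<ge> 0" and R0: "\<And>x. R x \<ge> 0"
  shows "\<exists>Y. Y 0 = y0 \<and> (\<forall>t\<ge>0. (Y has_vector_derivative g (Y t)) (at t within {0..}))"
proof -
  have "\<forall>y. \<exists>Y. Y 0 = y \<and> (\<forall>t\<in>{0..1}. (Y has_vector_derivative g (Y t)) (at t within {0..1}))"
    using ode_unit[OF loclip dR sub bnd a R0] by blast
  then obtain sol where sol0: "\<And>y. sol y 0 = y"
    and sold: "\<And>y t. t \<in> {0..1} \<Longrightarrow> (sol y has_vector_derivative g (sol y t)) (at t within {0..1})"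
    by metis
  define pts where "pts = rec_nat y0 (\<lambda>n y. sol y 1)"
  have pts0: "pts 0 = y0" and ptsS: "pts (Suc n) = sol (pts n) 1" for n by (simp_all add: pts_def)
  define Z where "Z t = sol (pts (nat \<lfloor>t\<rfloor>)) (t - of_int \<lfloor>t\<rfloor>)" for t :: real
  have Zn: "Z t = sol (pts n) (t - real n)" if "t \<in> {real n..real n + 1}" for n t
  proof (cases "t < real n + 1")
    case True
    then have "\<lfloor>t\<rfloor> = int n" using that by (simp add: floor_eq_iff)
    then show ?thesis by (simp add: Z_def)
  next
    case False
    then have t: "t = real (Suc n)" using that by auto
    have "\<lfloor>t\<rfloor> = int (Suc n)" unfolding t by simp
    then have "Z t = sol (pts (nat (int (Suc n)))) 0" by (simp add: Z_def t)
    then have "Z t = sol (pts (Suc n)) 0" by (metis nat_int)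
    also have "\<dots> = sol (pts n) (t - real n)" by (simp add: sol0 ptsS t)
    finally show ?thesis .
  qed
  have dZn: "(Z has_vector_derivative g (Z t)) (at t within {real n..real n + 1})"
    if t: "t \<in> {real n..real n + 1}" for n t
  proof -
    have "((\<lambda>s. sol (pts n) (s - real n)) has_vector_derivative g (sol (pts n) (t - real n))) (at t within {real n..real n + 1})"
      by (rule shift_deriv) (use t sold in auto)
    then have dd: "((\<lambda>s. sol (pts n) (s - real n)) has_vector_derivative g (Z t)) (at t within {real n..real n + 1})"
      using Zn[OF t] by simp
    show ?thesis
      by (rule has_vector_derivative_transform[OF t _ dd]) (use Zn in auto)
  qed
  show ?thesis
  proof (intro exI conjI allI impI)
    show "Z 0 = y0" by (simp add: Z_def sol0 pts0)
    fix t :: real assume t0: "0 \<le> t"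
    define n where "n = nat \<lfloor>t\<rfloor>"
    have tn: "real n \<le> t" "t < real n + 1" using t0 by (auto simp: n_def)
    show "(Z has_vector_derivative g (Z t)) (at t within {0..})"
    proof (cases "real n < t")
      case True
      have "at t within {0..} = at t within {real n..real n + 1}"
        by (rule at_within_nhd[where S="{real n<..<real n + 1}"]) (use True tn in auto)
      then show ?thesis using dZn[of t n] tn by simp
    next
      case False
      then have tn': "t = real n" using tn by simp
      show ?thesis
      proof (cases n)
        case 0
        have "at t within {0..} = at t within {real n..real n + 1}"
          by (rule at_within_nhd[where S="{-1<..<1}"]) (use tn' 0 in auto)
        then show ?thesis using dZn[of t n] tn by simp
      next
        case (Suc m)
        have d1: "(Z has_vector_derivative g (Z t)) (at t within {real m..real m + 1})"
          by (rule dZn) (use tn' Suc in auto)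
        have d2: "(Z has_vector_derivative g (Z t)) (at t within {real n..real n + 1})"
          by (rule dZn) (use tn in auto)
        have d: "(Z has_vector_derivative g (Z t)) (at t within ({real m..real m + 1} \<union> {real n..real n + 1}))"
          by (rule has_vector_derivative_Un[OF d1 d2])
        have "at t within {0..} = at t within ({real m..real m + 1} \<union> {real n..real n + 1})"
          by (rule at_within_nhd[where S="{real m<..<real n + 1}"]) (use tn' Suc in auto)
        then show ?thesis using d by simp
      qed
    qed
  qed
qed


lemma Kinf_major_mono:
  fixes m :: "real \<Rightarrow> real"
  assumes mono: "\<And>x y. 0 \<le> x \<Longrightarrow> x \<le> y \<Longrightarrow> m x \<le> m y"
    and m0: "m 0 = 0"
    and lim: "\<And>e. e > 0 \<Longrightarrow> \<exists>d>0. m d \<le> e"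
  shows "\<exists>\<rho>. class_K_inf \<rho> \<and> (\<forall>r\<ge>0. m r \<le> \<rho> r)"
proof -
  have mnn: "0 \<le> x \<Longrightarrow> 0 \<le> m x" for x using mono[of 0 x] m0 by simp
  define \<rho> where "\<rho> r = r + integral {1..2} (\<lambda>\<sigma>. m (r * \<sigma>))" for r
  have intm: "m integrable_on {a..b}" if "0 \<le> a" for a b
    by (rule integrable_on_mono_on) (use that mono in \<open>auto simp: mono_on_def\<close>)
  have ints: "(\<lambda>\<sigma>. m (r * \<sigma>)) integrable_on {1..2}" if "0 \<le> r" for r
    by (rule integrable_on_mono_on) (use that in \<open>auto simp: mono_on_def intro!: mono mult_left_mono\<close>)
  have lo: "m r \<le> integral {1..2} (\<lambda>\<sigma>. m (r * \<sigma>))" if "0 \<le> r" for r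
  proof -
    have "integral {1..2::real} (\<lambda>\<sigma>. m r) \<le> integral {1..2} (\<lambda>\<sigma>. m (r * \<sigma>))"
      by (rule integral_le) (use that ints in \<open>auto intro!: mono simp: mult_le_cancel_left1\<close>)
    then show ?thesis by simp
  qed
  have hi: "integral {1..2} (\<lambda>\<sigma>. m (r * \<sigma>)) \<le> m (2 * r)" if "0 \<le> r" for r
  proof -
    have "integral {1..2} (\<lambda>\<sigma>. m (r * \<sigma>)) \<le> integral {1..2::real} (\<lambda>\<sigma>. m (2 * r))"
      by (rule integral_le) (use that ints in \<open>auto intro!: mono simp: mult.commute[of 2] intro: mult_left_mono\<close>)
    then show ?thesis by simp
  qed
  have \<rho>0: "\<rho> 0 = 0" by (simp add: \<rho>_def m0)
  have smono: "strict_mono_on {0..} \<rho>"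
  proof (rule strict_mono_onI)
    fix x y :: real assume "x \<in> {0..}" "y \<in> {0..}" "x < y"
    then have "integral {1..2} (\<lambda>\<sigma>. m (x * \<sigma>)) \<le> integral {1..2} (\<lambda>\<sigma>. m (y * \<sigma>))"
      by (intro integral_le ints) (auto intro!: mono mult_right_mono)
    then show "\<rho> x < \<rho> y" using \<open>x < y\<close> by (simp add: \<rho>_def)
  qed
  have top: "filterlim \<rho> at_top at_top"
  proof (rule filterlim_at_top_mono[OF filterlim_ident])
    show "\<forall>\<^sub>F x in at_top. x \<le> \<rho> x"
      using eventually_ge_at_top[of 0]
      by eventually_elim (use lo mnn in \<open>fastforce simp: \<rho>_def\<close>)
  qed
  define F where "F s = integral {0..s} m" for s
  have Fc: "continuous_on {0..b} F" for b unfolding F_def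
    by (rule indefinite_integral_continuous_1[OF intm]) simp
  define \<psi> where "\<psi> r = r + (F (2 * r) - F r) / r" for r
  have \<rho>\<psi>: "\<rho> r = \<psi> r" if "0 < r" for r
  proof -
    have im: "(\<lambda>x. x / r) ` {r..2 * r} = {1..2}"
    proof
      show "(\<lambda>x. x / r) ` {r..2 * r} \<subseteq> {1..2}" using that by (auto simp: field_simps)
      show "{1..2} \<subseteq> (\<lambda>x. x / r) ` {r..2 * r}"
      proof
        fix x :: real assume "x \<in> {1..2}"
        then show "x \<in> (\<lambda>x. x / r) ` {r..2 * r}"
          using that by (intro image_eqI[of _ _ "x * r"]) (auto intro: mult_right_mono)
      qed
    qed
    have "integral {1..2} (\<lambda>\<sigma>. m (r * \<sigma>)) = (1 / \<bar>r\<bar>) *\<^sub>R integral {r..2 * r} m"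
      using integral_stretch_real[where m=r and f=m and a=r and b="2 * r"] that im by simp
    also have "integral {r..2 * r} m = F (2 * r) - F r"
    proof -
      have "integral {0..r} m + integral {r..2 * r} m = integral {0..2 * r} m"
        by (rule Henstock_Kurzweil_Integration.integral_combine) (use that intm in auto)
      then show ?thesis unfolding F_def by simp
    qed
    finally show ?thesis using that by (simp add: \<rho>_def \<psi>_def divide_inverse mult.commute)
  qed
  have \<psi>c: "continuous_on {c..C} \<psi>" if "0 < c" for c C
    unfolding \<psi>_def
  proof (intro continuous_intros)
    show "continuous_on {c..C} (\<lambda>x. F (2 * x))"
      by (rule continuous_on_compose2[OF Fc[of "2 * C"]]) (use that in \<open>auto intro!: continuous_intros\<close>)
    show "continuous_on {c..C} F"
      by (rule continuous_on_subset[OF Fc[of C]]) (use that in auto)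
  qed (use that in auto)
  have cont: "continuous_on {0..} \<rho>"
    unfolding continuous_on_eq_continuous_within
  proof
    fix x :: real assume x: "x \<in> {0..}"
    show "continuous (at x within {0..}) \<rho>"
    proof (cases "x = 0")
      case False
      then have xp: "0 < x" using x by auto
      have "continuous_on {x/2..2*x} \<rho>"
        by (rule continuous_on_eq[OF \<psi>c]) (use xp \<rho>\<psi> in auto)
      then have "continuous (at x within {x/2..2*x}) \<rho>"
        using xp by (simp add: continuous_on_eq_continuous_within)
      moreover have "at x within {0..} = at x within {x/2..2*x}"
        by (rule at_within_nhd[where S="{x/2<..<2*x}"]) (use xp in auto)
      ultimately show ?thesis by simp
    next
      case True
      show ?thesis unfolding True continuous_within_eps_delta
      proof (intro allI impI)
        fix e :: real assume e: "e > 0"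
        obtain d where d: "d > 0" "m d \<le> e / 2" using lim[of "e/2"] e by auto
        show "\<exists>d>0. \<forall>x'\<in>{0..}. dist x' 0 < d \<longrightarrow> dist (\<rho> x') (\<rho> 0) < e"
        proof (intro exI[of _ "min (d/2) (e/2)"] conjI ballI impI)
          show "0 < min (d/2) (e/2)" using d e by simp
          fix r :: real assume r: "r \<in> {0..}" "dist r 0 < min (d/2) (e/2)"
          then have r0: "0 \<le> r" "r < d/2" "r < e/2" by auto
          have "m (2 * r) \<le> m d" using r0 by (intro mono) auto
          then have "\<rho> r \<le> r + e/2" using hi[OF r0(1)] d by (simp add: \<rho>_def)
          moreover have "0 \<le> \<rho> r" using lo[OF r0(1)] mnn[OF r0(1)] r0 by (simp add: \<rho>_def)
          ultimately show "dist (\<rho> r) (\<rho> 0) < e" using r0 by (simp add: \<rho>0 dist_real_def)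
        qed
      qed
    qed
  qed
  have "class_K_inf \<rho>" unfolding class_K_inf_def class_K_def using cont \<rho>0 smono top by blast
  moreover have "\<forall>r\<ge>0. m r \<le> \<rho> r"
  proof (intro allI impI)
    fix r :: real assume r: "0 \<le> r"
    from lo[OF r] r show "m r \<le> \<rho> r" by (simp add: \<rho>_def)
  qed
  ultimately show ?thesis by blast
qed

lemma Kinf_major_rel:
  fixes P :: "real \<Rightarrow> real \<Rightarrow> bool"
  assumes nonneg: "\<And>a b. P a b \<Longrightarrow> 0 \<le> a"
    and bnd: "\<And>r. \<exists>C. \<forall>a b. P a b \<longrightarrow> a \<le> r \<longrightarrow> b \<le> C"
    and small: "\<And>e. e > 0 \<Longrightarrow> \<exists>d>0. \<forall>a b. P a b \<longrightarrow> a \<le> d \<longrightarrow> b \<le> e"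
  shows "\<exists>\<rho>. class_K_inf \<rho> \<and> (\<forall>a b. P a b \<longrightarrow> b \<le> \<rho> a)"
proof -
  define S where "S r = insert 0 {b. \<exists>a. P a b \<and> a \<le> r}" for r
  define m where "m r = Sup (S r)" for r
  have Sne: "S r \<noteq> {}" for r by (simp add: S_def)
  have Sbdd: "bdd_above (S r)" for r
  proof -
    obtain C where C: "\<forall>a b. P a b \<longrightarrow> a \<le> r \<longrightarrow> b \<le> C" using bnd by blast
    show ?thesis by (rule bdd_aboveI[of _ "max C 0"]) (use C in \<open>force simp: S_def\<close>)
  qed
  have mono: "m x \<le> m y" if "0 \<le> x" "x \<le> y" for x y
    unfolding m_def by (rule cSup_subset_mono[OF Sne Sbdd]) (use that in \<open>auto simp: S_def\<close>)
  have mle: "m r \<le> e" if "0 \<le> e" "\<And>a b. P a b \<Longrightarrow> a \<le> r \<Longrightarrow> b \<le> e" for r e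
    unfolding m_def by (rule cSup_least[OF Sne]) (use that in \<open>auto simp: S_def\<close>)
  have mge: "b \<le> m a" if "P a b" for a b
    unfolding m_def by (rule cSup_upper[OF _ Sbdd]) (use that in \<open>auto simp: S_def\<close>)
  have m0: "m 0 = 0"
  proof (rule antisym)
    show "m 0 \<le> 0"
    proof (rule mle)
      fix a b assume ab: "P a b" "a \<le> 0"
      show "b \<le> 0"
      proof (rule ccontr)
        assume "\<not> b \<le> 0"
        then obtain d where d: "d > 0" "\<forall>a b'. P a b' \<longrightarrow> a \<le> d \<longrightarrow> b' \<le> b / 2"
          using small[of "b/2"] by auto
        then have "b \<le> b / 2" using ab by auto
        then show False using \<open>\<not> b \<le> 0\<close> by simp
      qed
    qed simp
    show "0 \<le> m 0" unfolding m_def by (rule cSup_upper[OF _ Sbdd]) (simp add: S_def)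
  qed
  have lim: "\<exists>d>0. m d \<le> e" if e: "e > 0" for e
  proof -
    obtain d where d: "d > 0" "\<forall>a b. P a b \<longrightarrow> a \<le> d \<longrightarrow> b \<le> e" using small[OF e] by blast
    then have "m d \<le> e" using e by (intro mle) auto
    then show ?thesis using d by blast
  qed
  obtain \<rho> where \<rho>: "class_K_inf \<rho>" "\<forall>r\<ge>0. m r \<le> \<rho> r"
    using Kinf_major_mono[of m, OF mono m0 lim] by blast
  show ?thesis
  proof (intro exI conjI allI impI)
    show "class_K_inf \<rho>" by (rule \<rho>(1))
    fix a b assume "P a b"
    then show "b \<le> \<rho> a" using mge[of a b] \<rho>(2) nonneg[of a b] by force
  qed
qed


lemma P_reg:
  fixes P :: "real \<Rightarrow> 'a::euclidean_space" and h :: "real \<Rightarrow> 'a \<Rightarrow> 'a"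
  assumes hcont: "continuous_on ({0..1} \<times> UNIV) (\<lambda>(y,z). h y z)"
    and Peq: "\<And>x. x \<in> {0..1} \<Longrightarrow> P x = X0 + integral {0..x} (\<lambda>y. h y (P y))"
    and bound: "\<exists>K. \<forall>x\<in>{0..1}. (\<forall>y\<in>{0..x}. (P has_vector_derivative h y (P y)) (at y within {0..x}))
                    \<longrightarrow> (\<forall>y\<in>{0..x}. norm (P y) \<le> K)"
  shows "continuous_on {0..1} P \<and> (\<forall>x\<in>{0..1}. (P has_vector_derivative h x (P x)) (at x within {0..1}))"
proof -
  define g where "g y = h y (P y)" for y
  have g_eq: "(\<lambda>y. h y (P y)) = g" by (simp add: g_def fun_eq_iff)
  define S where "S = {x\<in>{0..1}. g integrable_on {0..x}}"
  have hc: "continuous_on T (\<lambda>y. h y (Q y))" if "continuous_on T Q" "T \<subseteq> {0..1}" for T Q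
  proof -
    have c1: "continuous_on T (\<lambda>y. (y, Q y))" by (intro continuous_intros that(1))
    have c2: "(\<lambda>y. (y, Q y)) ` T \<subseteq> {0..1} \<times> UNIV" using that(2) by auto
    show ?thesis using continuous_on_compose2[OF hcont c1 c2] by simp
  qed
  have claim1: "continuous_on {0..x} P \<and> (\<forall>y\<in>{0..x}. (P has_vector_derivative g y) (at y within {0..x}))"
    if xS: "x \<in> S" for x
  proof -
    have x01: "x \<in> {0..1}" and gi: "g integrable_on {0..x}" using xS by (auto simp: S_def)
    have Peq': "P y = X0 + integral {0..y} g" if "y \<in> {0..x}" for y
      using Peq[of y] that x01 by (simp add: g_eq)
    have Pc: "continuous_on {0..x} P"
      by (rule continuous_on_eq[of _ "\<lambda>y. X0 + integral {0..y} g"])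
         (use indefinite_integral_continuous_1[OF gi] Peq' in \<open>auto intro!: continuous_intros\<close>)
    have gc: "continuous_on {0..x} g" unfolding g_def by (rule hc[OF Pc]) (use x01 in auto)
    have "(P has_vector_derivative g y) (at y within {0..x})" if y: "y \<in> {0..x}" for y
    proof (rule has_vector_derivative_transform[OF y])
      show "P z = X0 + integral {0..z} g" if "z \<in> {0..x}" for z using Peq' that .
      show "((\<lambda>z. X0 + integral {0..z} g) has_vector_derivative g y) (at y within {0..x})"
        using integral_has_vector_derivative[OF gc y] by (auto intro!: derivative_eq_intros)
    qed
    then show ?thesis using Pc by blast
  qed
  obtain K where K: "\<And>x y. x \<in> {0..1} \<Longrightarrow> (\<forall>y\<in>{0..x}. (P has_vector_derivative h y (P y)) (at y within {0..x}))
                    \<Longrightarrow> y \<in> {0..x} \<Longrightarrow> norm (P y) \<le> K"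
    using bound by blast
  have PK: "norm (P y) \<le> K" if "y \<in> S" for y
    using K[of y y] claim1[OF that] that by (auto simp: S_def g_def)
  have "bounded ((\<lambda>(y,z). h y z) ` ({0..1} \<times> cball 0 K))"
    by (intro compact_imp_bounded compact_continuous_image continuous_on_subset[OF hcont]
        compact_Times) auto
  then obtain Kh0 where Kh0: "\<And>y z. y \<in> {0..1} \<Longrightarrow> z \<in> cball 0 K \<Longrightarrow> norm (h y z) \<le> Kh0"
    unfolding bounded_iff by fastforce
  define Kh where "Kh = max Kh0 0"
  have Kh: "Kh \<ge> 0" by (simp add: Kh_def)
  have gK: "norm (g y) \<le> Kh" if "y \<in> S" for y
    using Kh0[of y "P y"] PK[OF that] that by (auto simp: S_def g_def Kh_def)
  have S0: "0 \<in> S" using integrable_on_refl[of g "0::real"] by (simp add: S_def)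
  have down: "y \<in> S" if "x \<in> S" "y \<in> {0..x}" for x y
    using that integrable_on_subinterval[of g "{0..x}" 0 y] by (auto simp: S_def)
  have Ssub: "S \<subseteq> {0..1}" by (auto simp: S_def)
  have Sbdd: "bdd_above S" by (rule bdd_above_mono[OF bdd_above_Icc Ssub])
  define s where "s = Sup S"
  have s0: "0 \<le> s" unfolding s_def using cSup_upper[OF S0 Sbdd] .
  have s1: "s \<le> 1" unfolding s_def using Ssub S0 by (intro cSup_least) auto
  have below: "y \<in> S" if "y \<in> {0..<s}" for y
  proof -
    have "y < Sup S" using that by (simp add: s_def)
    then obtain x where "x \<in> S" "y < x" using less_cSup_iff[of S y] S0 Sbdd by blast
    then show ?thesis using down that by auto
  qed
  have sS: "s \<in> S"
  proof (cases "s = 0")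
    case True then show ?thesis using S0 by simp
  next
    case False
    then have sp: "0 < s" using s0 by simp
    define fk where "fk k y = (if y \<in> {0..s - 1 / real (Suc k)} then g y else 0)" for k y
    define gt where "gt y = (if y < s then g y else 0)" for y
    have fki: "fk k integrable_on {0..s}" for k
    proof -
      have "g integrable_on ({0..s - 1 / real (Suc k)} \<inter> {0..s})"
      proof (cases "s - 1 / real (Suc k) < 0")
        case True then show ?thesis by (simp add: integrable_on_empty)
      next
        case False
        then have "s - 1 / real (Suc k) \<in> S" by (intro below) auto
        moreover have "{0..s - 1 / real (Suc k)} \<inter> {0..s} = {0..s - 1 / real (Suc k)}" by auto
        ultimately show ?thesis by (simp add: S_def)
      qed
      then show ?thesis unfolding fk_def by (subst integrable_restrict_Int)
    qed
    have fkb: "norm (fk k y) \<le> Kh" if "y \<in> {0..s}" for k y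
    proof (cases "y \<in> {0..s - 1 / real (Suc k)}")
      case True
      have a: "0 < 1 / real (Suc k)" by simp
      have b: "0 \<le> y" "y \<le> s - 1 / real (Suc k)" using True by auto
      have "y < s" using a b by linarith
      then have "y \<in> {0..<s}" using b by simp
      then have "y \<in> S" by (rule below)
      then show ?thesis using gK True by (simp add: fk_def)
    next
      case False then show ?thesis by (simp only: fk_def if_False norm_zero Kh)
    qed
    have fkc: "(\<lambda>k. fk k y) \<longlonglongrightarrow> gt y" if "y \<in> {0..s}" for y
    proof (cases "y < s")
      case True
      obtain n where n: "inverse (real (Suc n)) < s - y" using reals_Archimedean[of "s - y"] True by auto
      have "\<forall>\<^sub>F k in sequentially. fk k y = gt y"
        unfolding eventually_sequentially
      proof (intro exI allI impI)
        fix k assume "n \<le> k"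
        then have "1 / real (Suc k) \<le> 1 / real (Suc n)" by (intro divide_left_mono) auto
        then have "y \<le> s - 1 / real (Suc k)" using n by (simp add: inverse_eq_divide)
        then show "fk k y = gt y" using that True by (simp add: fk_def gt_def)
      qed
      then show ?thesis by (rule tendsto_eventually)
    next
      case False
      have "\<not> y \<le> s - 1 / real (Suc k)" for k
      proof -
        have "0 < 1 / real (Suc k)" by simp
        then show ?thesis using False by linarith
      qed
      then have "fk k y = 0" for k unfolding fk_def by (metis atLeastAtMost_iff)
      then show ?thesis using False by (simp add: gt_def)
    qed
    have "gt integrable_on {0..s}"
      by (rule dominated_convergence(1)[OF fki _ fkb fkc]) auto
    then have "g integrable_on {0..s}"
      by (rule integrable_spike_finite[of "{s}", rotated 2]) (auto simp: gt_def)
    then show ?thesis using s0 s1 by (simp add: S_def)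
  qed
  have s_eq: "s = 1"
  proof (rule ccontr)
    assume "s \<noteq> 1" then have sl: "s < 1" using s1 by simp
    have Px: "P x = X0" if "x \<in> {s<..1}" for x
    proof -
      have "x \<notin> S"
      proof
        assume "x \<in> S" then have "x \<le> s" unfolding s_def using cSup_upper[OF _ Sbdd] by blast
        then show False using that by simp
      qed
      then have "\<not> g integrable_on {0..x}" using that s0 by (simp add: S_def)
      then show ?thesis using Peq[of x] that s0 by (simp add: not_integrable_integral g_eq)
    qed
    have qc: "continuous_on {s..1} (\<lambda>y. h y X0)" by (rule hc) (use s0 in \<open>auto intro: continuous_intros\<close>)
    have "g integrable_on {s..1}"
      by (rule integrable_spike_finite[of "{s}" _ _ "\<lambda>y. h y X0"])
         (use Px integrable_continuous_real[OF qc] in \<open>auto simp: g_def\<close>)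
    then have "g integrable_on {0..1}"
      using Henstock_Kurzweil_Integration.integrable_combine[where a=0 and c=s and b=1 and f=g] sS s0 s1 by (auto simp: S_def)
    then have "1 \<in> S" by (simp add: S_def)
    then have "1 \<le> s" unfolding s_def using cSup_upper[OF _ Sbdd] by blast
    then show False using sl by simp
  qed
  then show ?thesis using claim1[of 1] sS by (simp add: g_def)
qed


lemma reparam:
  fixes \<Gamma> :: "real \<Rightarrow> real"
  assumes \<Gamma>c: "continuous_on {0..1} \<Gamma>" and \<Gamma>pos: "\<And>x. x \<in> {0..1} \<Longrightarrow> \<Gamma> x > 0"
  shows "\<exists>s \<xi>. s 0 = 0 \<and> 0 < s 1 \<and> (\<forall>x\<in>{0..1}. s x \<in> {0..s 1} \<and> \<xi> (s x) = x)
     \<and> (\<forall>\<sigma>\<in>{0..s 1}. \<xi> \<sigma> \<in> {0..1} \<and> s (\<xi> \<sigma>) = \<sigma>) \<and> continuous_on {0..s 1} \<xi>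
     \<and> (\<forall>\<sigma>\<in>{0..s 1}. (\<xi> has_real_derivative 1 / \<Gamma> (\<xi> \<sigma>)) (at \<sigma>))"
proof -
  define cl :: "real \<Rightarrow> real" where "cl y = max 0 (min 1 y)" for y
  define \<Gamma>e where "\<Gamma>e y = \<Gamma> (cl y)" for y
  have cl01: "cl y \<in> {0..1}" for y by (simp add: cl_def)
  have clid: "y \<in> {0..1} \<Longrightarrow> cl y = y" for y by (simp add: cl_def)
  have \<Gamma>ec: "continuous_on UNIV \<Gamma>e" unfolding \<Gamma>e_def
    by (rule continuous_on_compose2[OF \<Gamma>c]) (auto simp: cl_def intro!: continuous_intros)
  have \<Gamma>epos: "\<Gamma>e y > 0" for y using \<Gamma>pos cl01 by (simp add: \<Gamma>e_def)
  define s where "s x = integral {-2..x} \<Gamma>e - integral {-2..0} \<Gamma>e" for x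
  have ds: "(s has_real_derivative \<Gamma>e x) (at x)" if "-2 < x" "x < 3" for x
  proof -
    have "((\<lambda>x. integral {-2..x} \<Gamma>e) has_vector_derivative \<Gamma>e x) (at x within {-2..3})"
      by (rule integral_has_vector_derivative) (use that continuous_on_subset[OF \<Gamma>ec] in auto)
    then have "((\<lambda>x. integral {-2..x} \<Gamma>e) has_real_derivative \<Gamma>e x) (at x)"
      using that by (simp add: has_real_derivative_iff_has_vector_derivative at_within_Icc_at)
    then show ?thesis unfolding s_def by (auto intro!: derivative_eq_intros)
  qed
  have s0: "s 0 = 0" by (simp add: s_def)
  have smono: "s x < s y" if "-1 \<le> x" "x < y" "y \<le> 2" for x y
    by (rule DERIV_pos_imp_increasing[OF that(2)]) (use that ds \<Gamma>epos in \<open>force\<close>)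
  have sle: "s x \<le> s y" if "-1 \<le> x" "x \<le> y" "y \<le> 2" for x y
    using smono[of x y] that by (cases "x = y") auto
  have scont: "continuous_on {-1..2} s"
    by (rule DERIV_atLeastAtMost_imp_continuous_on) (use ds in force)
  have inj: "inj_on s {-1..2}"
    by (rule inj_onI) (metis atLeastAtMost_iff linorder_neqE_linordered_idom order_less_irrefl smono)
  define \<xi> where "\<xi> = the_inv_into {-1..2} s"
  have \<xi>c: "continuous_on (s ` {-1..2}) \<xi>"
    unfolding \<xi>_def by (rule continuous_on_inv_into[OF scont _ inj]) simp
  have ivt: "\<exists>x\<in>{a..b}. s x = y" if "-1 \<le> a" "a \<le> b" "b \<le> 2" "s a \<le> y" "y \<le> s b" for a b y
    using IVT'[of s a y b] that continuous_on_subset[OF scont, of "{a..b}"] by auto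
  have \<xi>s: "\<xi> (s x) = x" if "x \<in> {-1..2}" for x
    unfolding \<xi>_def by (rule the_inv_into_f_f[OF inj that])
  have s\<xi>: "s (\<xi> y) = y" "\<xi> y \<in> {-1..2}" if "y \<in> s ` {-1..2}" for y
    unfolding \<xi>_def using f_the_inv_into_f[OF inj that] the_inv_into_into[OF inj that order_refl] by auto
  have S1: "0 < s 1" using smono[of 0 1] s0 by simp
  have prop1: "\<forall>x\<in>{0..1}. s x \<in> {0..s 1} \<and> \<xi> (s x) = x"
  proof
    fix x :: real assume x: "x \<in> {0..1}"
    have "s 0 \<le> s x" "s x \<le> s 1" using x by (auto intro!: sle)
    then show "s x \<in> {0..s 1} \<and> \<xi> (s x) = x" using s0 \<xi>s[of x] x by auto
  qed
  have inS: "\<sigma> \<in> s ` {0..1}" if "\<sigma> \<in> {0..s 1}" for \<sigma>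
    using ivt[of 0 1 \<sigma>] that s0 by auto
  have prop2: "\<forall>\<sigma>\<in>{0..s 1}. \<xi> \<sigma> \<in> {0..1} \<and> s (\<xi> \<sigma>) = \<sigma>"
  proof
    fix \<sigma> assume "\<sigma> \<in> {0..s 1}"
    then obtain x where x: "x \<in> {0..1}" "\<sigma> = s x" using inS by blast
    then show "\<xi> \<sigma> \<in> {0..1} \<and> s (\<xi> \<sigma>) = \<sigma>" using \<xi>s[of x] by auto
  qed
  have sub01: "s ` {0..1} \<subseteq> s ` {-1..2}" by auto
  have open_in: "{s (-1)<..<s 2} \<subseteq> s ` {-1..2}"
  proof
    fix y assume "y \<in> {s (-1)<..<s 2}"
    then show "y \<in> s ` {-1..2}" using ivt[of "-1" 2 y] by force
  qed
  have prop3: "continuous_on {0..s 1} \<xi>"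
    by (rule continuous_on_subset[OF \<xi>c]) (use inS sub01 in blast)
  have prop4: "(\<xi> has_real_derivative 1 / \<Gamma> (\<xi> \<sigma>)) (at \<sigma>)" if \<sigma>: "\<sigma> \<in> {0..s 1}" for \<sigma>
  proof -
    have x: "\<xi> \<sigma> \<in> {0..1}" "s (\<xi> \<sigma>) = \<sigma>" using prop2 \<sigma> by auto
    have lo: "s (-1) < \<sigma>" using smono[of "-1" 0] s0 \<sigma> by auto
    have hi: "\<sigma> < s 2" using smono[of 1 2] \<sigma> by auto
    have der: "(s has_real_derivative \<Gamma>e (\<xi> \<sigma>)) (at (\<xi> \<sigma>))" using ds x by auto
    have ic: "isCont \<xi> \<sigma>"
    proof (rule continuous_on_interior[OF \<xi>c])
      show "\<sigma> \<in> interior (s ` {-1..2})"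
        using interior_mono[OF open_in] lo hi by (auto simp: interior_open)
    qed
    have "(\<xi> has_real_derivative inverse (\<Gamma>e (\<xi> \<sigma>))) (at \<sigma>)"
    proof (rule DERIV_inverse_function[where f=s and g=\<xi> and x=\<sigma>, OF der _ lo hi _ ic])
      show "\<Gamma>e (\<xi> \<sigma>) \<noteq> 0" using \<Gamma>epos[of "\<xi> \<sigma>"] by simp
      fix y assume "s (-1) < y" "y < s 2"
      then show "s (\<xi> y) = y" using open_in s\<xi>(1) by auto
    qed
    then show ?thesis using x by (simp add: \<Gamma>e_def clid inverse_eq_divide)
  qed
  show ?thesis using s0 S1 prop1 prop2 prop3 prop4 by blast
qed

lemma shift_deriv2:
  fixes Y :: "real \<Rightarrow> 'a::real_normed_vector"
  assumes "(Y has_vector_derivative D) (at (t - c) within {0..})" "t \<in> {c..}"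
  shows "((\<lambda>s. Y (s - c)) has_vector_derivative D) (at t within {c..})"
proof -
  have im: "(\<lambda>s. s - c) ` {c..} = {0..}"
  proof
    show "(\<lambda>s. s - c) ` {c..} \<subseteq> {0..}" by auto
    show "{0..} \<subseteq> (\<lambda>s. s - c) ` {c..}"
    proof
      fix x :: real assume "x \<in> {0..}"
      then show "x \<in> (\<lambda>s. s - c) ` {c..}" by (intro image_eqI[of _ _ "x + c"]) auto
    qed
  qed
  have "((\<lambda>s. s - c) has_vector_derivative 1) (at t within {c..})"
    by (auto intro!: derivative_eq_intros simp: has_real_derivative_iff_has_vector_derivative[symmetric])
  from vector_diff_chain_within[OF this, of Y D] assms(1) im
  show ?thesis by (simp add: o_def)
qed

lemma ISS_apply:
  fixes f :: "'a::euclidean_space \<Rightarrow> real \<Rightarrow> 'a" and \<kappa> :: "'a \<Rightarrow> real" and P :: "real \<Rightarrow> 'a"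
  assumes iss: "\<And>X \<omega>. continuous_on {0..} \<omega> \<Longrightarrow>
        (\<forall>t\<ge>0. (X has_vector_derivative f (X t) (\<kappa> (X t) + \<omega> t)) (at t within {0..})) \<Longrightarrow>
        (\<forall>t\<ge>0. norm (X t) \<le> \<beta> (norm (X 0)) t + \<gamma> (sup_on {0..t} \<omega>))"
    and ode: "\<And>c y0. \<exists>Y. Y 0 = y0 \<and> (\<forall>t\<ge>0. (Y has_vector_derivative f (Y t) c) (at t within {0..}))"
    and \<kappa>c: "continuous_on UNIV \<kappa>"
    and \<Gamma>c: "continuous_on {0..1} \<Gamma>" and \<Gamma>pos: "\<And>x. x \<in> {0..1} \<Longrightarrow> \<Gamma> x > 0"
    and Wc: "continuous_on {0..1} W"
    and dP: "\<And>x. x \<in> {0..1} \<Longrightarrow> (P has_vector_derivative \<Gamma> x *\<^sub>R f (P x) (\<kappa> (P x) + W x)) (at x within {0..1})"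
    and Wm: "\<And>x. x \<in> {0..1} \<Longrightarrow> \<bar>W x\<bar> \<le> Wm"
    and \<beta>anti: "\<And>r t. 0 \<le> r \<Longrightarrow> 0 \<le> t \<Longrightarrow> \<beta> r t \<le> \<beta> r 0"
    and \<gamma>mono: "\<And>a b. 0 \<le> a \<Longrightarrow> a \<le> b \<Longrightarrow> \<gamma> a \<le> \<gamma> b"
  shows "\<forall>x\<in>{0..1}. norm (P x) \<le> \<beta> (norm (P 0)) 0 + \<gamma> Wm"
proof -
  obtain s \<xi> where s0: "s 0 = 0" and S1pos: "0 < s 1"
    and p1: "\<forall>x\<in>{0..1}. s x \<in> {0..s 1} \<and> \<xi> (s x) = x"
    and p2: "\<forall>\<sigma>\<in>{0..s 1}. \<xi> \<sigma> \<in> {0..1} \<and> s (\<xi> \<sigma>) = \<sigma>"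
    and \<xi>c: "continuous_on {0..s 1} \<xi>"
    and d\<xi>: "\<forall>\<sigma>\<in>{0..s 1}. (\<xi> has_real_derivative 1 / \<Gamma> (\<xi> \<sigma>)) (at \<sigma>)"
    using reparam[OF \<Gamma>c \<Gamma>pos] by blast
  define S1 where "S1 = s 1"
  have S1: "0 \<le> S1" using S1pos by (simp add: S1_def)
  have \<xi>im: "\<xi> ` {0..S1} = {0..1}"
  proof
    show "\<xi> ` {0..S1} \<subseteq> {0..1}" using p2 by (auto simp: S1_def)
    show "{0..1} \<subseteq> \<xi> ` {0..S1}"
    proof
      fix x :: real assume "x \<in> {0..1}"
      then show "x \<in> \<xi> ` {0..S1}" using p1 by (intro image_eqI[of _ _ "s x"]) (auto simp: S1_def)
    qed
  qed
  define Q where "Q \<sigma> = P (\<xi> \<sigma>)" for \<sigma>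
  define \<omega> where "\<omega> \<sigma> = W (\<xi> \<sigma>)" for \<sigma>
  have dQ: "(Q has_vector_derivative f (Q \<sigma>) (\<kappa> (Q \<sigma>) + \<omega> \<sigma>)) (at \<sigma> within {0..S1})"
    if \<sigma>: "\<sigma> \<in> {0..S1}" for \<sigma>
  proof -
    have x: "\<xi> \<sigma> \<in> {0..1}" using p2 \<sigma> by (auto simp: S1_def)
    have "(\<xi> has_vector_derivative 1 / \<Gamma> (\<xi> \<sigma>)) (at \<sigma> within {0..S1})"
      using d\<xi> \<sigma> by (auto simp: S1_def has_real_derivative_iff_has_vector_derivative intro: has_vector_derivative_at_within)
    from vector_diff_chain_within[OF this, of P "\<Gamma> (\<xi> \<sigma>) *\<^sub>R f (P (\<xi> \<sigma>)) (\<kappa> (P (\<xi> \<sigma>)) + W (\<xi> \<sigma>))"]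
    have "((P \<circ> \<xi>) has_vector_derivative (1 / \<Gamma> (\<xi> \<sigma>)) *\<^sub>R (\<Gamma> (\<xi> \<sigma>) *\<^sub>R f (P (\<xi> \<sigma>)) (\<kappa> (P (\<xi> \<sigma>)) + W (\<xi> \<sigma>)))) (at \<sigma> within {0..S1})"
      using dP[OF x] \<xi>im by simp
    moreover have "\<Gamma> (\<xi> \<sigma>) \<noteq> 0" using \<Gamma>pos[OF x] by simp
    moreover have "Q = (\<lambda>\<sigma>. P (\<xi> \<sigma>))" by (simp add: Q_def fun_eq_iff)
    ultimately show ?thesis by (simp add: Q_def \<omega>_def o_def)
  qed
  define c where "c = \<kappa> (Q S1) + \<omega> S1"
  obtain Y where Y0: "Y 0 = Q S1" and dY: "\<And>t. t \<ge> 0 \<Longrightarrow> (Y has_vector_derivative f (Y t) c) (at t within {0..})"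
    using ode[of "Q S1" c] by blast
  have Yc: "continuous_on {0..} Y"
    unfolding continuous_on_eq_continuous_within
    using dY has_vector_derivative_continuous by fastforce
  define Xi where "Xi \<sigma> = (if \<sigma> \<le> S1 then Q \<sigma> else Y (\<sigma> - S1))" for \<sigma>
  define \<omega>i where "\<omega>i \<sigma> = (if \<sigma> \<le> S1 then \<omega> \<sigma> else c - \<kappa> (Y (\<sigma> - S1)))" for \<sigma>
  have split: "{0..} = {0..S1} \<union> {S1..}" using S1 by auto
  have \<omega>c: "continuous_on {0..S1} \<omega>"
    unfolding \<omega>_def by (rule continuous_on_compose2[OF Wc \<xi>c[folded S1_def]]) (use \<xi>im in auto)
  have \<omega>ic: "continuous_on {0..} \<omega>i"
    unfolding split
  proof (rule continuous_on_closed_Un)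
    show "continuous_on {0..S1} \<omega>i"
      by (rule continuous_on_eq[OF \<omega>c]) (auto simp: \<omega>i_def)
    have "continuous_on {S1..} (\<lambda>\<sigma>. c - \<kappa> (Y (\<sigma> - S1)))"
    proof (intro continuous_intros continuous_on_compose2[OF \<kappa>c] continuous_on_compose2[OF Yc])
    qed auto
    then show "continuous_on {S1..} \<omega>i"
      by (rule continuous_on_eq) (auto simp: \<omega>i_def c_def Y0)
  qed auto
  have dXi: "(Xi has_vector_derivative f (Xi \<sigma>) (\<kappa> (Xi \<sigma>) + \<omega>i \<sigma>)) (at \<sigma> within {0..})"
    if \<sigma>0: "\<sigma> \<ge> 0" for \<sigma>
  proof -
    have A: "(Xi has_vector_derivative f (Xi \<sigma>) (\<kappa> (Xi \<sigma>) + \<omega>i \<sigma>)) (at \<sigma> within {0..S1})"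
      if "\<sigma> \<in> {0..S1}"
    proof (rule has_vector_derivative_transform[OF that])
      show "Xi x = Q x" if "x \<in> {0..S1}" for x using that by (simp add: Xi_def)
      show "(Q has_vector_derivative f (Xi \<sigma>) (\<kappa> (Xi \<sigma>) + \<omega>i \<sigma>)) (at \<sigma> within {0..S1})"
        using dQ[OF that] that by (simp add: Xi_def \<omega>i_def)
    qed
    have B: "(Xi has_vector_derivative f (Xi \<sigma>) (\<kappa> (Xi \<sigma>) + \<omega>i \<sigma>)) (at \<sigma> within {S1..})"
      if "\<sigma> \<in> {S1..}"
    proof (rule has_vector_derivative_transform[OF that])
      show "Xi x = Y (x - S1)" if "x \<in> {S1..}" for x using that Y0 by (auto simp: Xi_def)
      have "f (Y (\<sigma> - S1)) c = f (Xi \<sigma>) (\<kappa> (Xi \<sigma>) + \<omega>i \<sigma>)"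
        using that Y0 by (auto simp: Xi_def \<omega>i_def c_def)
      moreover have "((\<lambda>x. Y (x - S1)) has_vector_derivative f (Y (\<sigma> - S1)) c) (at \<sigma> within {S1..})"
        by (rule shift_deriv2) (use that dY in auto)
      ultimately show "((\<lambda>x. Y (x - S1)) has_vector_derivative f (Xi \<sigma>) (\<kappa> (Xi \<sigma>) + \<omega>i \<sigma>)) (at \<sigma> within {S1..})"
        by simp
    qed
    consider "\<sigma> < S1" | "\<sigma> = S1" | "\<sigma> > S1" by linarith
    then show ?thesis
    proof cases
      case 1
      have "at \<sigma> within {0..} = at \<sigma> within {0..S1}"
        by (rule at_within_nhd[where S="{..<S1}"]) (use 1 in auto)
      then show ?thesis using A 1 \<sigma>0 by simp
    next
      case 2
      then show ?thesis unfolding split using A B S1 by (intro has_vector_derivative_Un) auto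
    next
      case 3
      have "at \<sigma> within {0..} = at \<sigma> within {S1..}"
        by (rule at_within_nhd[where S="{S1<..}"]) (use 3 S1 in auto)
      then show ?thesis using B 3 by simp
    qed
  qed
  have issb: "\<forall>t\<ge>0. norm (Xi t) \<le> \<beta> (norm (Xi 0)) t + \<gamma> (sup_on {0..t} \<omega>i)"
    by (rule iss[OF \<omega>ic]) (use dXi in auto)
  show ?thesis
  proof
    fix x :: real assume x: "x \<in> {0..1}"
    define \<sigma> where "\<sigma> = s x"
    have \<sigma>: "\<sigma> \<in> {0..S1}" "\<xi> \<sigma> = x" using p1 x by (auto simp: \<sigma>_def S1_def)
    have X\<sigma>: "Xi \<sigma> = P x" using \<sigma> by (simp add: Xi_def Q_def)
    have \<xi>0: "\<xi> 0 = 0" using p1 s0 by force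
    have X0: "Xi 0 = P 0" using S1 \<xi>0 by (simp add: Xi_def Q_def)
    have \<omega>ib: "\<bar>\<omega>i \<tau>\<bar> \<le> Wm" if "\<tau> \<in> {0..\<sigma>}" for \<tau>
    proof -
      have "\<tau> \<in> {0..S1}" using that \<sigma> by auto
      then have "\<xi> \<tau> \<in> {0..1}" using p2 by (auto simp: S1_def)
      then show ?thesis using Wm that \<sigma> by (auto simp: \<omega>i_def \<omega>_def)
    qed
    have sup_le: "sup_on {0..\<sigma>} \<omega>i \<le> Wm"
      unfolding sup_on_def by (rule cSUP_least) (use \<sigma> \<omega>ib in auto)
    have sup_ge: "0 \<le> sup_on {0..\<sigma>} \<omega>i"
    proof -
      have "bdd_above ((\<lambda>\<tau>. \<bar>\<omega>i \<tau>\<bar>) ` {0..\<sigma>})" using \<omega>ib by (intro bdd_aboveI2[where M=Wm]) auto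
      then have "\<bar>\<omega>i 0\<bar> \<le> sup_on {0..\<sigma>} \<omega>i"
        unfolding sup_on_def by (rule cSUP_upper2[where x=0]) (use \<sigma> in auto)
      then show ?thesis by linarith
    qed
    have "norm (P x) \<le> \<beta> (norm (P 0)) \<sigma> + \<gamma> (sup_on {0..\<sigma>} \<omega>i)"
      using issb \<sigma> X\<sigma> X0 by auto
    also have "\<dots> \<le> \<beta> (norm (P 0)) 0 + \<gamma> Wm"
      using \<beta>anti[of "norm (P 0)" \<sigma>] \<gamma>mono[OF sup_ge sup_le] \<sigma> by auto
    finally show "norm (P x) \<le> \<beta> (norm (P 0)) 0 + \<gamma> Wm" .
  qed
qed


lemma K_mono: "class_K \<alpha> \<Longrightarrow> 0 \<le> x \<Longrightarrow> x \<le> y \<Longrightarrow> \<alpha> x \<le> \<alpha> y"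
  unfolding class_K_def by (metis atLeast_iff order.trans order_le_less strict_mono_onD)

lemma K_nonneg: "class_K \<alpha> \<Longrightarrow> 0 \<le> x \<Longrightarrow> 0 \<le> \<alpha> x"
  using K_mono[of \<alpha> 0 x] unfolding class_K_def by simp

lemma Kinf_K: "class_K_inf \<alpha> \<Longrightarrow> class_K \<alpha>"
  by (simp add: class_K_inf_def)

lemma K_small:
  assumes "class_K \<alpha>" "e > 0"
  shows "\<exists>d>0. \<forall>x. 0 \<le> x \<longrightarrow> x \<le> d \<longrightarrow> \<alpha> x \<le> e"
proof -
  have "continuous (at 0 within {0..}) \<alpha>"
    using assms(1) unfolding class_K_def continuous_on_eq_continuous_within by auto
  then obtain d where d: "d > 0" "\<And>x. x \<in> {0..} \<Longrightarrow> dist x 0 < d \<Longrightarrow> dist (\<alpha> x) (\<alpha> 0) < e"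
    unfolding continuous_within_eps_delta using assms(2) by blast
  have a0: "\<alpha> 0 = 0" using assms(1) by (simp add: class_K_def)
  show ?thesis
  proof (intro exI[of _ "d/2"] conjI allI impI)
    show "0 < d/2" using d by simp
    fix x :: real assume "0 \<le> x" "x \<le> d/2"
    then show "\<alpha> x \<le> e" using d(2)[of x] d(1) a0 by (auto simp: dist_real_def)
  qed
qed

lemma K_inv_small:
  assumes "class_K \<alpha>" "e > 0"
  shows "\<exists>c>0. \<forall>r\<ge>0. \<alpha> r \<le> c \<longrightarrow> r < e"
proof -
  have sm: "strict_mono_on {0..} \<alpha>" and a0: "\<alpha> 0 = 0" using assms(1) by (auto simp: class_K_def)
  have pos: "\<alpha> e > 0" using strict_mono_onD[OF sm, of 0 e] a0 assms(2) by auto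
  show ?thesis
  proof (intro exI[of _ "\<alpha> e / 2"] conjI allI impI)
    show "0 < \<alpha> e / 2" using pos by simp
    fix r :: real assume r: "0 \<le> r" "\<alpha> r \<le> \<alpha> e / 2"
    show "r < e"
    proof (rule ccontr)
      assume "\<not> r < e"
      then have "\<alpha> e \<le> \<alpha> r" using K_mono[OF assms(1), of e r] assms(2) by auto
      then show False using r pos by simp
    qed
  qed
qed

lemma Kinf_sub:
  assumes "class_K_inf \<alpha>"
  shows "\<exists>\<rho>. \<forall>r\<ge>0. \<alpha> r \<le> C \<longrightarrow> r < \<rho>"
proof -
  have "filterlim \<alpha> at_top at_top" using assms by (simp add: class_K_inf_def)
  then have "\<forall>\<^sub>F x in at_top. C + 1 \<le> \<alpha> x" by (simp add: filterlim_at_top)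
  then obtain N where N: "\<And>x. x \<ge> N \<Longrightarrow> C + 1 \<le> \<alpha> x" by (auto simp: eventually_at_top_linorder)
  show ?thesis
  proof (intro exI[of _ N] allI impI)
    fix r :: real assume "0 \<le> r" "\<alpha> r \<le> C"
    then show "r < N" using N[of r] by (cases "r \<ge> N") auto
  qed
qed

lemma cont_bounded_cball:
  fixes \<phi> :: "'a::euclidean_space \<Rightarrow> 'b::real_normed_vector"
  assumes "continuous_on UNIV \<phi>"
  shows "\<exists>K\<ge>0. \<forall>x. norm x \<le> r \<longrightarrow> norm (\<phi> x) \<le> K"
proof -
  have "bounded (\<phi> ` cball 0 r)"
    by (intro compact_imp_bounded compact_continuous_image continuous_on_subset[OF assms]) auto
  then obtain K where K: "\<And>x. x \<in> cball 0 r \<Longrightarrow> norm (\<phi> x) \<le> K" unfolding bounded_iff by blast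
  show ?thesis by (intro exI[of _ "max K 0"]) (use K in \<open>force simp: dist_norm\<close>)
qed

lemma cont_small0:
  fixes \<phi> :: "'a::real_normed_vector \<Rightarrow> 'b::real_normed_vector"
  assumes "continuous_on UNIV \<phi>" "\<phi> 0 = 0" "e > 0"
  shows "\<exists>d>0. \<forall>x. norm x \<le> d \<longrightarrow> norm (\<phi> x) \<le> e"
proof -
  have "isCont \<phi> 0" using assms(1) by (simp add: continuous_on_eq_continuous_at)
  then obtain d where d: "d > 0" "\<And>x. dist x 0 < d \<Longrightarrow> dist (\<phi> x) (\<phi> 0) < e"
    unfolding continuous_at_eps_delta using assms(3) by blast
  show ?thesis
  proof (intro exI[of _ "d/2"] conjI allI impI)
    fix x :: 'a assume "norm x \<le> d/2"
    then have "norm x < d" using d(1) by simp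
    then show "norm (\<phi> x) \<le> e" using d(2)[of x] assms(2) by (simp add: dist_norm)
  qed (use d in auto)
qed


locale setting5 =
  fixes f :: "'a::euclidean_space \<Rightarrow> real \<Rightarrow> 'a" and v :: "real \<Rightarrow> real" and \<kappa> :: "'a \<Rightarrow> real"
    and M :: real and vlow :: real and R :: "'a \<Rightarrow> real" and R' :: "'a \<Rightarrow> 'a \<Rightarrow> real"
    and \<alpha>1 :: "real \<Rightarrow> real" and \<alpha>2 :: "real \<Rightarrow> real" and \<alpha>3 :: "real \<Rightarrow> real"
    and \<kappa>d :: "'a \<Rightarrow> 'a \<Rightarrow>\<^sub>L real" and \<beta> :: "real \<Rightarrow> real \<Rightarrow> real" and \<gamma> :: "real \<Rightarrow> real"
  assumes fcont: "continuous_on UNIV (\<lambda>(X, w). f X w)"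
    and floclip: "\<And>r c. \<exists>L. \<forall>x\<in>cball 0 r. \<forall>y\<in>cball 0 r. norm (f x c - f y c) \<le> L * norm (x - y)"
    and f00: "f 0 0 = 0"
    and vlow: "vlow > 0" and vge: "\<And>s. vlow \<le> v s"
    and vcont: "continuous_on UNIV v" and dvcont: "continuous_on UNIV (deriv v)"
    and M: "M > 0"
    and dR: "\<And>x. (R has_derivative R' x) (at x)"
    and R0: "\<And>x. 0 \<le> R x" and R1: "\<And>x. \<alpha>1 (norm x) \<le> R x" and R2: "\<And>x. R x \<le> \<alpha>2 (norm x)"
    and Rf: "\<And>X \<omega>. R' X (f X \<omega>) \<le> R X + \<alpha>3 \<bar>\<omega>\<bar>"
    and \<alpha>1: "class_K_inf \<alpha>1" and \<alpha>2: "class_K_inf \<alpha>2" and \<alpha>3: "class_K_inf \<alpha>3"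
    and d\<kappa>: "\<And>x. (\<kappa> has_derivative blinfun_apply (\<kappa>d x)) (at x)"
    and \<kappa>dc: "continuous_on UNIV \<kappa>d"
    and \<kappa>0: "\<kappa> 0 = 0"
    and \<beta>: "class_KL \<beta>" and \<gamma>: "class_K \<gamma>"
    and iss: "\<And>X \<omega>. continuous_on {0..} \<omega> \<Longrightarrow>
        (\<forall>t\<ge>0. (X has_vector_derivative f (X t) (\<kappa> (X t) + \<omega> t)) (at t within {0..})) \<Longrightarrow>
        (\<forall>t\<ge>0. norm (X t) \<le> \<beta> (norm (X 0)) t + \<gamma> (sup_on {0..t} \<omega>))"
begin

definition "G = (1 + M) / vlow"

lemma G_pos: "G > 0" using M vlow by (simp add: G_def)

lemma \<kappa>cont: "continuous_on UNIV \<kappa>"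
proof -
  have "isCont \<kappa> x" for x by (rule has_derivative_continuous[OF d\<kappa>])
  then show ?thesis by (simp add: continuous_on_eq_continuous_at)
qed

lemma vpos: "v s > 0" using vlow vge[of s] by linarith

lemma \<alpha>3K: "class_K \<alpha>3" using \<alpha>3 by (rule Kinf_K)

lemma sub1: "\<exists>\<rho>. \<forall>x. R x \<le> C \<longrightarrow> norm x < \<rho>"
proof -
  obtain \<rho> where \<rho>: "\<forall>r\<ge>0. \<alpha>1 r \<le> C \<longrightarrow> r < \<rho>" using Kinf_sub[OF \<alpha>1] by blast
  show ?thesis
  proof (intro exI allI impI)
    fix x assume "R x \<le> C"
    then have "\<alpha>1 (norm x) \<le> C" using R1[of x] by linarith
    then show "norm x < \<rho>" using \<rho> by simp
  qed
qed

lemma ode: "\<exists>Y. Y 0 = y0 \<and> (\<forall>t\<ge>0. (Y has_vector_derivative f (Y t) c) (at t within {0..}))"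
proof (rule ode_global[where R=R and R'=R' and a="\<alpha>3 \<bar>c\<bar>"])
  show "\<exists>L. \<forall>x\<in>cball 0 r. \<forall>y\<in>cball 0 r. norm (f x c - f y c) \<le> L * norm (x - y)" for r
    by (rule floclip)
  show "(R has_derivative R' x) (at x)" for x by (rule dR)
  show "\<exists>\<rho>. \<forall>x. R x \<le> C \<longrightarrow> norm x < \<rho>" for C by (rule sub1)
  show "R' x (f x c) \<le> R x + \<alpha>3 \<bar>c\<bar>" for x by (rule Rf)
  show "0 \<le> \<alpha>3 \<bar>c\<bar>" using K_nonneg[OF \<alpha>3K] by simp
  show "0 \<le> R x" for x by (rule R0)
qed

lemma \<beta>anti: "0 \<le> r \<Longrightarrow> 0 \<le> t \<Longrightarrow> \<beta> r t \<le> \<beta> r 0"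
proof -
  assume r: "0 \<le> r" and t: "0 \<le> t"
  have "antimono_on {0..} (\<beta> r)" using \<beta> r unfolding class_KL_def by blast
  then show "\<beta> r t \<le> \<beta> r 0" using t by (auto simp: monotone_on_def)
qed

lemma \<gamma>mono: "0 \<le> a \<Longrightarrow> a \<le> b \<Longrightarrow> \<gamma> a \<le> \<gamma> b"
  using K_mono[OF \<gamma>] .

end


locale ft = setting5 +
  fixes U Ux Wx :: "real \<Rightarrow> real" and P :: "real \<Rightarrow> 'a::euclidean_space" and X0 :: "'a"
  assumes Uc: "continuous_on {0..1} U" and Uxc: "continuous_on {0..1} Ux"
    and dU: "\<And>x. x \<in> {0..1} \<Longrightarrow> (U has_real_derivative Ux x) (at x within {0..1})"
    and ratio: "\<And>x. x \<in> {0..1} \<Longrightarrow> -M < deriv v (U x) * Ux x / v (U x) \<and> deriv v (U x) * Ux x / v (U x) < 1"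
    and Peq: "\<And>x. x \<in> {0..1} \<Longrightarrow> P x = X0 + integral {0..x} (\<lambda>y. Gamma v (U y) (Ux y) y *\<^sub>R f (P y) (U y))"
    and dW: "\<And>x. x \<in> {0..1} \<Longrightarrow> ((\<lambda>y. U y - \<kappa> (P y)) has_real_derivative Wx x) (at x within {0..1})"
begin

definition "\<Gamma> x = Gamma v (U x) (Ux x) x"

lemma \<Gamma>_bounds: assumes x: "x \<in> {0..1}" shows "0 < \<Gamma> x" "\<Gamma> x \<le> G"
proof -
  define V where "V = v (U x)"
  define r where "r = deriv v (U x) * Ux x / V"
  have V: "V > 0" "vlow \<le> V" using vpos vge by (auto simp: V_def)
  have r: "-M < r" "r < 1" using ratio[OF x] by (auto simp: r_def V_def)
  have \<Gamma>eq: "\<Gamma> x = (1 - x * r) / V"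
    using V by (simp add: \<Gamma>_def Gamma_def r_def V_def field_simps power2_eq_square)
  have x01: "0 \<le> x" "x \<le> 1" using x by auto
  have xr1: "x * r < 1"
  proof (cases "r \<ge> 0")
    case True
    then have "x * r \<le> 1 * r" using x01 by (intro mult_right_mono) auto
    then show ?thesis using r by simp
  next
    case False
    then have "x * r \<le> 0" using x01 by (simp add: mult_nonneg_nonpos)
    then show ?thesis by simp
  qed
  have xr2: "-M < x * r"
  proof (cases "r \<ge> 0")
    case True
    then have "0 \<le> x * r" using x01 by simp
    then show ?thesis using M by simp
  next
    case False
    then have "1 * r \<le> x * r" using x01 by (intro mult_right_mono_neg) auto
    then show ?thesis using r by simp
  qed
  show "0 < \<Gamma> x" unfolding \<Gamma>eq using xr1 V by simp
  have "\<Gamma> x \<le> (1 + M) / V" unfolding \<Gamma>eq using xr2 V by (intro divide_right_mono) auto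
  also have "\<dots> \<le> (1 + M) / vlow" using V vlow M by (intro divide_left_mono) auto
  finally show "\<Gamma> x \<le> G" by (simp add: G_def)
qed

lemma vU: "continuous_on {0..1} (\<lambda>x. v (U x))"
  by (rule continuous_on_compose2[OF vcont Uc]) auto

lemma dvU: "continuous_on {0..1} (\<lambda>x. deriv v (U x))"
  by (rule continuous_on_compose2[OF dvcont Uc]) auto

lemma \<Gamma>_cont: "continuous_on {0..1} \<Gamma>"
proof -
  have ne: "v (U x) \<noteq> 0" for x using vpos[of "U x"] by simp
  show ?thesis unfolding \<Gamma>_def Gamma_def
    by (intro continuous_intros vU dvU Uxc) (auto simp: ne)
qed

lemma P0: "P 0 = X0" using Peq[of 0] by simp

lemma U_bounded: "\<exists>Um\<ge>0. \<forall>x\<in>{0..1}. \<bar>U x\<bar> \<le> Um"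
proof -
  have "bounded (U ` {0..1})" by (intro compact_imp_bounded compact_continuous_image Uc) auto
  then obtain K where "\<And>x. x \<in> {0..1} \<Longrightarrow> norm (U x) \<le> K" unfolding bounded_iff by blast
  then show ?thesis by (intro exI[of _ "max K 0"]) force
qed

lemma Pgrowth:
  assumes Um: "\<forall>x\<in>{0..1}. \<bar>U x\<bar> \<le> Um" and x: "x \<in> {0..1}"
    and dP: "\<forall>y\<in>{0..x}. (P has_vector_derivative \<Gamma> y *\<^sub>R f (P y) (U y)) (at y within {0..x})"
  shows "R (P x) + \<alpha>3 Um \<le> exp (G * x) * (R X0 + \<alpha>3 Um)"
proof -
  have "R (P x) + \<alpha>3 Um \<le> exp (G * x) * (R (P 0) + \<alpha>3 Um)"
  proof (rule R_growth[where R'=R'])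
    show "0 \<le> x" using x by simp
    show "(P has_vector_derivative \<Gamma> s *\<^sub>R f (P s) (U s)) (at s within {0..x})" if "s \<in> {0..x}" for s
      using dP that by blast
    show "(R has_derivative R' z) (at z)" for z by (rule dR)
    fix s assume s: "s \<in> {0..x}"
    then have s01: "s \<in> {0..1}" using x by auto
    have lin: "linear (R' (P s))" using dR has_derivative_bounded_linear bounded_linear.linear by blast
    have "R' (P s) (\<Gamma> s *\<^sub>R f (P s) (U s)) = \<Gamma> s * R' (P s) (f (P s) (U s))"
      using linear_scale[OF lin] by simp
    also have "\<dots> \<le> \<Gamma> s * (R (P s) + \<alpha>3 \<bar>U s\<bar>)"
      using Rf \<Gamma>_bounds[OF s01] by (intro mult_left_mono) auto
    also have "\<dots> \<le> \<Gamma> s * (R (P s) + \<alpha>3 Um)"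
      using K_mono[OF \<alpha>3K, of "\<bar>U s\<bar>" Um] Um s01 \<Gamma>_bounds[OF s01] by (intro mult_left_mono) auto
    also have "\<dots> \<le> G * (R (P s) + \<alpha>3 Um)"
    proof (rule mult_right_mono)
      show "\<Gamma> s \<le> G" using \<Gamma>_bounds[OF s01] by simp
      have "0 \<le> Um" using Um abs_ge_zero[of "U 0"] by force
      then show "0 \<le> R (P s) + \<alpha>3 Um" using R0 K_nonneg[OF \<alpha>3K] by (simp add: add_nonneg_nonneg)
    qed
    finally show "R' (P s) (\<Gamma> s *\<^sub>R f (P s) (U s)) \<le> G * (R (P s) + \<alpha>3 Um)" .
  qed
  then show ?thesis by (simp add: P0)
qed

lemma growth_exp:
  assumes Um: "\<forall>x\<in>{0..1}. \<bar>U x\<bar> \<le> Um" and x: "x \<in> {0..1}"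
    and dP: "\<forall>y\<in>{0..x}. (P has_vector_derivative \<Gamma> y *\<^sub>R f (P y) (U y)) (at y within {0..x})"
  shows "R (P x) \<le> exp G * (R X0 + \<alpha>3 Um)"
proof -
  have Um0: "0 \<le> Um" using Um abs_ge_zero[of "U 0"] by force
  have nn: "0 \<le> R X0 + \<alpha>3 Um" using R0 K_nonneg[OF \<alpha>3K Um0] by simp
  have "R (P x) + \<alpha>3 Um \<le> exp (G * x) * (R X0 + \<alpha>3 Um)" by (rule Pgrowth[OF Um x dP])
  also have "\<dots> \<le> exp G * (R X0 + \<alpha>3 Um)"
    using x G_pos nn by (intro mult_right_mono) (auto simp: mult_le_cancel_left1)
  finally show ?thesis using K_nonneg[OF \<alpha>3K Um0] by simp
qed

lemma P_props: "continuous_on {0..1} P \<and> (\<forall>x\<in>{0..1}. (P has_vector_derivative \<Gamma> x *\<^sub>R f (P x) (U x)) (at x within {0..1}))"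
proof (rule P_reg[where ?X0.0=X0])
  have c1: "continuous_on ({0..1} \<times> UNIV) (\<lambda>p. \<Gamma> (fst p))"
    by (rule continuous_on_compose2[OF \<Gamma>_cont continuous_on_fst]) auto
  have c2: "continuous_on ({0..1} \<times> UNIV) (\<lambda>p. U (fst p))"
    by (rule continuous_on_compose2[OF Uc continuous_on_fst]) auto
  have c3: "continuous_on ({0..1} \<times> UNIV) (\<lambda>p. (snd p, U (fst p)))"
    by (intro continuous_intros c2)
  have c4: "continuous_on ({0..1} \<times> UNIV) (\<lambda>p. f (snd p) (U (fst p)))"
    using continuous_on_compose2[OF fcont c3] by simp
  show "continuous_on ({0..1} \<times> UNIV) (\<lambda>(y, z). \<Gamma> y *\<^sub>R f z (U y))"
    using continuous_on_scaleR[OF c1 c4] by (simp add: case_prod_beta)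
  show "P x = X0 + integral {0..x} (\<lambda>y. \<Gamma> y *\<^sub>R f (P y) (U y))" if "x \<in> {0..1}" for x
    using Peq[OF that] by (simp add: \<Gamma>_def)
  obtain Um where Um: "Um \<ge> 0" "\<forall>x\<in>{0..1}. \<bar>U x\<bar> \<le> Um" using U_bounded by blast
  obtain \<rho> where \<rho>: "\<And>z. R z \<le> exp G * (R X0 + \<alpha>3 Um) \<Longrightarrow> norm z < \<rho>" using sub1 by blast
  show "\<exists>K. \<forall>x\<in>{0..1}. (\<forall>y\<in>{0..x}. (P has_vector_derivative \<Gamma> y *\<^sub>R f (P y) (U y)) (at y within {0..x}))
                    \<longrightarrow> (\<forall>y\<in>{0..x}. norm (P y) \<le> K)"
  proof (intro exI[of _ \<rho>] ballI impI)
    fix x y assume x: "x \<in> {0..1}" and dP: "\<forall>y\<in>{0..x}. (P has_vector_derivative \<Gamma> y *\<^sub>R f (P y) (U y)) (at y within {0..x})"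
      and y: "y \<in> {0..x}"
    have y01: "y \<in> {0..1}" using x y by auto
    have dPy: "\<forall>z\<in>{0..y}. (P has_vector_derivative \<Gamma> z *\<^sub>R f (P z) (U z)) (at z within {0..y})"
    proof
      fix z assume z: "z \<in> {0..y}"
      then have "z \<in> {0..x}" using y by auto
      then have "(P has_vector_derivative \<Gamma> z *\<^sub>R f (P z) (U z)) (at z within {0..x})"
        using dP by blast
      then show "(P has_vector_derivative \<Gamma> z *\<^sub>R f (P z) (U z)) (at z within {0..y})"
        by (rule has_vector_derivative_within_subset) (use y in auto)
    qed
    have "R (P y) \<le> exp G * (R X0 + \<alpha>3 Um)" by (rule growth_exp[OF Um(2) y01 dPy])
    then show "norm (P y) \<le> \<rho>" using \<rho> by force
  qed
qed

lemma Pc: "continuous_on {0..1} P" using P_props by blast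
lemma dP: "x \<in> {0..1} \<Longrightarrow> (P has_vector_derivative \<Gamma> x *\<^sub>R f (P x) (U x)) (at x within {0..1})"
  using P_props by blast

lemma R_bound:
  assumes Um: "\<forall>x\<in>{0..1}. \<bar>U x\<bar> \<le> Um" and x: "x \<in> {0..1}"
  shows "R (P x) \<le> exp G * (R X0 + \<alpha>3 Um)"
proof (rule growth_exp[OF Um x])
  show "\<forall>y\<in>{0..x}. (P has_vector_derivative \<Gamma> y *\<^sub>R f (P y) (U y)) (at y within {0..x})"
  proof
    fix y assume y: "y \<in> {0..x}"
    then have "y \<in> {0..1}" using x by auto
    then show "(P has_vector_derivative \<Gamma> y *\<^sub>R f (P y) (U y)) (at y within {0..x})"
      by (rule has_vector_derivative_within_subset[OF dP]) (use x in auto)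
  qed
qed

lemma Wx_eq:
  assumes x: "x \<in> {0..1}"
  shows "Wx x = Ux x - \<kappa>d (P x) (\<Gamma> x *\<^sub>R f (P x) (U x))"
proof -
  define D where "D = \<Gamma> x *\<^sub>R f (P x) (U x)"
  have "((\<kappa> \<circ> P) has_derivative (\<kappa>d (P x) \<circ> (\<lambda>h. h *\<^sub>R D))) (at x within {0..1})"
    apply (rule diff_chain_within)
    using dP[OF x] apply (simp add: has_vector_derivative_def D_def)
    using d\<kappa> has_derivative_at_withinI by blast
  moreover have "(\<kappa>d (P x) \<circ> (\<lambda>h. h *\<^sub>R D)) = (\<lambda>h. \<kappa>d (P x) D * h)"
    by (auto simp: fun_eq_iff blinfun.scaleR_right)
  ultimately have "((\<lambda>y. \<kappa> (P y)) has_real_derivative \<kappa>d (P x) D) (at x within {0..1})"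
    by (simp add: has_field_derivative_def o_def)
  then have d2: "((\<lambda>y. U y - \<kappa> (P y)) has_real_derivative Ux x - \<kappa>d (P x) D) (at x within {0..1})"
    using dU[OF x] by (intro derivative_intros) auto
  show ?thesis
    using vector_derivative_unique_within_closed_interval[of 0 1 x]
      dW[OF x] d2 x
    by (auto simp: has_real_derivative_iff_has_vector_derivative D_def)
qed

lemma Wx_cont: "continuous_on {0..1} Wx"
proof -
  have c1: "continuous_on {0..1} (\<lambda>x. \<kappa>d (P x))"
    by (rule continuous_on_compose2[OF \<kappa>dc Pc]) auto
  have c2: "continuous_on {0..1} (\<lambda>x. f (P x) (U x))"
    using continuous_on_compose2[OF fcont, of "{0..1}" "\<lambda>x. (P x, U x)"] Pc Uc
    by (auto intro!: continuous_intros)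
  have "continuous_on {0..1} (\<lambda>x. Ux x - \<kappa>d (P x) (\<Gamma> x *\<^sub>R f (P x) (U x)))"
    by (intro continuous_intros Uxc c1 c2 \<Gamma>_cont)
  then show ?thesis by (rule continuous_on_eq) (use Wx_eq in auto)
qed

lemma W_cont: "continuous_on {0..1} (\<lambda>x. U x - \<kappa> (P x))"
  by (intro continuous_intros Uc continuous_on_compose2[OF \<kappa>cont Pc]) auto

lemma ISS_bound:
  assumes Wm: "\<forall>x\<in>{0..1}. \<bar>U x - \<kappa> (P x)\<bar> \<le> Wm" and x: "x \<in> {0..1}"
  shows "norm (P x) \<le> \<beta> (norm X0) 0 + \<gamma> Wm"
proof -
  have "\<forall>x\<in>{0..1}. norm (P x) \<le> \<beta> (norm (P 0)) 0 + \<gamma> Wm"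
    apply (rule ISS_apply[where \<Gamma>=\<Gamma> and W="\<lambda>x. U x - \<kappa> (P x)", OF iss ode \<kappa>cont \<Gamma>_cont])
    using \<Gamma>_bounds W_cont dP Wm \<beta>anti \<gamma>mono by auto
  then show ?thesis using x by (simp add: P0)
qed

end


lemma supnorm_ge:
  assumes "continuous_on {0..1} g" "x \<in> {0..1}"
  shows "\<bar>g x\<bar> \<le> supnorm01 g"
proof -
  have "bounded (g ` {0..1})" by (intro compact_imp_bounded compact_continuous_image assms(1)) auto
  then obtain K where K: "\<And>y. y \<in> {0..1} \<Longrightarrow> \<bar>g y\<bar> \<le> K" unfolding bounded_iff by (auto simp del: atLeastAtMost_iff)
  have "bdd_above ((\<lambda>y. \<bar>g y\<bar>) ` {0..1})" by (intro bdd_aboveI2[where M=K]) (use K in auto)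
  then show ?thesis unfolding supnorm01_def by (rule cSUP_upper[OF assms(2)])
qed

lemma supnorm_nonneg: "continuous_on {0..1} g \<Longrightarrow> 0 \<le> supnorm01 g"
  using supnorm_ge[of g 0] by force

lemma supnorm_le: "(\<And>x. x \<in> {0..1} \<Longrightarrow> \<bar>g x\<bar> \<le> B) \<Longrightarrow> supnorm01 g \<le> B"
  unfolding supnorm01_def by (rule cSUP_least) auto

context ft
begin

lemma Wx_diff: "x \<in> {0..1} \<Longrightarrow> \<bar>Wx x - Ux x\<bar> \<le> norm (\<kappa>d (P x)) * (G * norm (f (P x) (U x)))"
proof -
  assume x: "x \<in> {0..1}"
  have "\<bar>Wx x - Ux x\<bar> = \<bar>\<kappa>d (P x) (\<Gamma> x *\<^sub>R f (P x) (U x))\<bar>" using Wx_eq[OF x] by simp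
  also have "\<dots> \<le> norm (\<kappa>d (P x)) * norm (\<Gamma> x *\<^sub>R f (P x) (U x))"
    using norm_blinfun[of "\<kappa>d (P x)"] by (metis real_norm_def)
  also have "norm (\<Gamma> x *\<^sub>R f (P x) (U x)) = \<Gamma> x * norm (f (P x) (U x))"
    using \<Gamma>_bounds[OF x] by simp
  also have "\<dots> \<le> G * norm (f (P x) (U x))"
    using \<Gamma>_bounds[OF x] by (intro mult_right_mono) auto
  finally show ?thesis by (simp add: mult_left_mono)
qed

lemma Om_parts:
  defines "Om \<equiv> norm X0 + supnorm01 U + supnorm01 Ux"
  shows "norm X0 \<le> Om" "\<And>x. x \<in> {0..1} \<Longrightarrow> \<bar>U x\<bar> \<le> Om" "\<And>x. x \<in> {0..1} \<Longrightarrow> \<bar>Ux x\<bar> \<le> Om" "0 \<le> Om"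
proof -
  have a: "0 \<le> supnorm01 U" "0 \<le> supnorm01 Ux" using supnorm_nonneg[OF Uc] supnorm_nonneg[OF Uxc] by auto
  have n: "0 \<le> norm X0" by simp
  show "norm X0 \<le> Om" "0 \<le> Om" using a n unfolding Om_def by linarith+
  show "\<bar>U x\<bar> \<le> Om" if "x \<in> {0..1}" for x
    using a n supnorm_ge[OF Uc that] unfolding Om_def by linarith
  show "\<bar>Ux x\<bar> \<le> Om" if "x \<in> {0..1}" for x
    using a n supnorm_ge[OF Uxc that] unfolding Om_def by linarith
qed

lemma Ow_parts:
  defines "Ow \<equiv> norm X0 + supnorm01 (\<lambda>x. U x - \<kappa> (P x)) + supnorm01 Wx"
  shows "norm X0 \<le> Ow" "\<And>x. x \<in> {0..1} \<Longrightarrow> \<bar>U x - \<kappa> (P x)\<bar> \<le> Ow" "\<And>x. x \<in> {0..1} \<Longrightarrow> \<bar>Wx x\<bar> \<le> Ow" "0 \<le> Ow"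
proof -
  have a: "0 \<le> supnorm01 (\<lambda>x. U x - \<kappa> (P x))" "0 \<le> supnorm01 Wx"
    using supnorm_nonneg[OF W_cont] supnorm_nonneg[OF Wx_cont] by auto
  have n: "0 \<le> norm X0" by simp
  show "norm X0 \<le> Ow" "0 \<le> Ow" using a n unfolding Ow_def by linarith+
  show "\<bar>U x - \<kappa> (P x)\<bar> \<le> Ow" if "x \<in> {0..1}" for x
    using a n supnorm_ge[OF W_cont that] unfolding Ow_def by linarith
  show "\<bar>Wx x\<bar> \<le> Ow" if "x \<in> {0..1}" for x
    using a n supnorm_ge[OF Wx_cont that] unfolding Ow_def by linarith
qed

end


context setting5
begin

lemma fpair_bound:
  assumes "\<And>z. norm z \<le> B \<Longrightarrow> norm ((\<lambda>(X,w). f X w) z) \<le> K" "norm q + \<bar>w\<bar> \<le> B"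
  shows "norm (f q w) \<le> K"
proof -
  have "norm (q, w) \<le> norm q + norm w" by (rule norm_Pair_le)
  then have "norm (q, w) \<le> B" using assms(2) by simp
  then show ?thesis using assms(1)[of "(q, w)"] by simp
qed

lemma kd_bound:
  assumes "norm (\<kappa>d q) \<le> Kd" "norm (f q w) \<le> Kf"
  shows "norm (\<kappa>d q) * (G * norm (f q w)) \<le> Kd * (G * Kf)"
proof -
  have "0 \<le> Kd" using assms(1) norm_ge_zero[of "\<kappa>d q"] by linarith
  then show ?thesis using assms G_pos by (intro mult_mono) (auto intro: mult_left_mono)
qed

lemma L3bnd: "\<exists>C. \<forall>U Ux Wx P X0. ft f v \<kappa> M vlow R R' \<alpha>1 \<alpha>2 \<alpha>3 \<kappa>d \<beta> \<gamma> U Ux Wx P X0 \<longrightarrow>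
     norm X0 + supnorm01 U + supnorm01 Ux \<le> r \<longrightarrow>
     norm X0 + supnorm01 (\<lambda>x. U x - \<kappa> (P x)) + supnorm01 Wx \<le> C"
proof -
  define r' where "r' = max r 0"
  have r'0: "0 \<le> r'" by (simp add: r'_def)
  define C1 where "C1 = exp G * (\<alpha>2 r' + \<alpha>3 r')"
  obtain \<rho> where \<rho>: "\<And>q. R q \<le> C1 \<Longrightarrow> norm q < \<rho>" using sub1 by blast
  obtain Kk where Kk: "\<And>q. norm q \<le> \<rho> \<Longrightarrow> norm (\<kappa> q) \<le> Kk" using cont_bounded_cball[OF \<kappa>cont, of \<rho>] by blast
  obtain Kd where Kd: "\<And>q. norm q \<le> \<rho> \<Longrightarrow> norm (\<kappa>d q) \<le> Kd" using cont_bounded_cball[OF \<kappa>dc, of \<rho>] by blast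
  obtain Kf where Kf: "\<And>z. norm z \<le> \<rho> + r' \<Longrightarrow> norm ((\<lambda>(X,w). f X w) z) \<le> Kf"
    using cont_bounded_cball[OF fcont, of "\<rho> + r'"] by blast
  show ?thesis
  proof (intro exI allI impI)
    fix U Ux Wx P X0
    assume ftA: "ft f v \<kappa> M vlow R R' \<alpha>1 \<alpha>2 \<alpha>3 \<kappa>d \<beta> \<gamma> U Ux Wx P X0"
      and Om: "norm X0 + supnorm01 U + supnorm01 Ux \<le> r"
    interpret ft f v \<kappa> M vlow R R' \<alpha>1 \<alpha>2 \<alpha>3 \<kappa>d \<beta> \<gamma> U Ux Wx P X0 by (rule ftA)
    have X0r: "norm X0 \<le> r'" using Om_parts(1) Om by (simp add: r'_def)
    have Ur: "\<forall>x\<in>{0..1}. \<bar>U x\<bar> \<le> r'" using Om_parts(2) Om by (force simp: r'_def)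
    have Uxr: "\<And>x. x \<in> {0..1} \<Longrightarrow> \<bar>Ux x\<bar> \<le> r'" using Om_parts(3) Om by (force simp: r'_def)
    have RX0: "R X0 \<le> \<alpha>2 r'" using R2[of X0] K_mono[OF Kinf_K[OF \<alpha>2] _ X0r] by simp
    have P\<rho>: "norm (P x) < \<rho>" if x: "x \<in> {0..1}" for x
    proof (rule \<rho>)
      have "R (P x) \<le> exp G * (R X0 + \<alpha>3 r')" by (rule R_bound[OF Ur x])
      also have "\<dots> \<le> C1" unfolding C1_def using RX0 by (intro mult_left_mono) auto
      finally show "R (P x) \<le> C1" .
    qed
    have Wb: "\<bar>U x - \<kappa> (P x)\<bar> \<le> r' + Kk" if x: "x \<in> {0..1}" for x
      using Ur x Kk[of "P x"] P\<rho>[OF x] by (smt (verit, best) real_norm_def)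
    have fb: "norm (f (P x) (U x)) \<le> Kf" if x: "x \<in> {0..1}" for x
    proof (rule fpair_bound[OF Kf])
      have "\<bar>U x\<bar> \<le> r'" using Ur x by blast
      then show "norm (P x) + \<bar>U x\<bar> \<le> \<rho> + r'" using P\<rho>[OF x] by linarith
    qed
    have Wxb: "\<bar>Wx x\<bar> \<le> r' + Kd * (G * Kf)" if x: "x \<in> {0..1}" for x
    proof -
      have "norm (\<kappa>d (P x)) * (G * norm (f (P x) (U x))) \<le> Kd * (G * Kf)"
        by (rule kd_bound) (use Kd[of "P x"] P\<rho>[OF x] fb[OF x] in auto)
      then show ?thesis using Wx_diff[OF x] Uxr[OF x] by linarith
    qed
    have "supnorm01 (\<lambda>x. U x - \<kappa> (P x)) \<le> r' + Kk" by (rule supnorm_le) (use Wb in auto)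
    moreover have "supnorm01 Wx \<le> r' + Kd * (G * Kf)" by (rule supnorm_le) (use Wxb in auto)
    ultimately show "norm X0 + supnorm01 (\<lambda>x. U x - \<kappa> (P x)) + supnorm01 Wx \<le> r' + (r' + Kk) + (r' + Kd * (G * Kf))"
      using X0r by linarith
  qed
qed

lemma f0: "(\<lambda>(X,w). f X w) 0 = 0" by (simp add: zero_prod_def f00)

lemma ef_calc:
  assumes "0 \<le> Kd0" "norm (\<kappa>d q) \<le> Kd0" "norm (f q w) \<le> e / (6 * (Kd0 + 1) * G)" "e > 0"
  shows "norm (\<kappa>d q) * (G * norm (f q w)) \<le> e / 6"
proof -
  have "norm (\<kappa>d q) * (G * norm (f q w)) \<le> Kd0 * (G * (e / (6 * (Kd0 + 1) * G)))"
    using assms G_pos by (intro mult_mono mult_left_mono) auto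
  also have "G * (e / (6 * (Kd0 + 1) * G)) = e / (6 * (Kd0 + 1))" using G_pos by simp
  also have "Kd0 * (e / (6 * (Kd0 + 1))) = e / 6 * (Kd0 / (Kd0 + 1))" by simp
  also have "\<dots> \<le> e / 6 * 1" using assms by (intro mult_left_mono) auto
  finally show ?thesis by simp
qed

lemma L3small:
  assumes e: "e > 0"
  shows "\<exists>d>0. \<forall>U Ux Wx P X0. ft f v \<kappa> M vlow R R' \<alpha>1 \<alpha>2 \<alpha>3 \<kappa>d \<beta> \<gamma> U Ux Wx P X0 \<longrightarrow>
     norm X0 + supnorm01 U + supnorm01 Ux \<le> d \<longrightarrow>
     norm X0 + supnorm01 (\<lambda>x. U x - \<kappa> (P x)) + supnorm01 Wx \<le> e"
proof -
  obtain Kd0 where Kd00: "Kd0 \<ge> 0" and Kd0: "\<And>q. norm q \<le> 1 \<Longrightarrow> norm (\<kappa>d q) \<le> Kd0"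
    using cont_bounded_cball[OF \<kappa>dc, of 1] by blast
  define ef where "ef = e / (6 * (Kd0 + 1) * G)"
  have ef: "ef > 0" using e Kd00 G_pos by (simp add: ef_def)
  obtain df where df: "df > 0" "\<And>z. norm z \<le> df \<Longrightarrow> norm ((\<lambda>(X,w). f X w) z) \<le> ef"
    using cont_small0[OF fcont f0 ef] by blast
  obtain dk where dk: "dk > 0" "\<And>q. norm q \<le> dk \<Longrightarrow> norm (\<kappa> q) \<le> e/6"
    using cont_small0[OF \<kappa>cont \<kappa>0, of "e/6"] e by auto
  define \<delta>P where "\<delta>P = min 1 (min dk (df/2))"
  have \<delta>P: "\<delta>P > 0" using dk df by (simp add: \<delta>P_def)
  obtain c where c: "c > 0" "\<And>r. r \<ge> 0 \<Longrightarrow> \<alpha>1 r \<le> c \<Longrightarrow> r < \<delta>P"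
    using K_inv_small[OF Kinf_K[OF \<alpha>1] \<delta>P] by blast
  have ce: "c / (2 * exp G) > 0" using c by simp
  obtain d2 where d2: "d2 > 0" "\<And>x. 0 \<le> x \<Longrightarrow> x \<le> d2 \<Longrightarrow> \<alpha>2 x \<le> c / (2 * exp G)"
    using K_small[OF Kinf_K[OF \<alpha>2] ce] by blast
  obtain d3 where d3: "d3 > 0" "\<And>x. 0 \<le> x \<Longrightarrow> x \<le> d3 \<Longrightarrow> \<alpha>3 x \<le> c / (2 * exp G)"
    using K_small[OF \<alpha>3K ce] by blast
  define d where "d = min (min (e/6) (df/2)) (min d2 d3)"
  have d: "d > 0" using e df d2 d3 by (simp add: d_def)
  show ?thesis
  proof (intro exI[of _ d] conjI allI impI d)
    fix U Ux Wx P X0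
    assume ftA: "ft f v \<kappa> M vlow R R' \<alpha>1 \<alpha>2 \<alpha>3 \<kappa>d \<beta> \<gamma> U Ux Wx P X0"
      and Om: "norm X0 + supnorm01 U + supnorm01 Ux \<le> d"
    interpret ft f v \<kappa> M vlow R R' \<alpha>1 \<alpha>2 \<alpha>3 \<kappa>d \<beta> \<gamma> U Ux Wx P X0 by (rule ftA)
    have X0r: "norm X0 \<le> d" using Om_parts(1) Om by simp
    have Ur: "\<forall>x\<in>{0..1}. \<bar>U x\<bar> \<le> d" using Om_parts(2) Om by force
    have Uxr: "\<And>x. x \<in> {0..1} \<Longrightarrow> \<bar>Ux x\<bar> \<le> d" using Om_parts(3) Om by force
    have RX0: "R X0 \<le> c / (2 * exp G)" using R2[of X0] d2(2)[of "norm X0"] X0r by (simp add: d_def)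
    have a3: "\<alpha>3 d \<le> c / (2 * exp G)" using d3(2)[of d] d by (simp add: d_def)
    have P\<delta>: "norm (P x) < \<delta>P" if x: "x \<in> {0..1}" for x
    proof (rule c(2))
      have "R (P x) \<le> exp G * (R X0 + \<alpha>3 d)" by (rule R_bound[OF Ur x])
      also have "\<dots> \<le> exp G * (c / (2 * exp G) + c / (2 * exp G))"
        using RX0 a3 by (intro mult_left_mono) auto
      also have "\<dots> = c" by simp
      finally have "R (P x) \<le> c" .
      then show "\<alpha>1 (norm (P x)) \<le> c" using R1[of "P x"] by linarith
    qed simp
    have Wb: "\<bar>U x - \<kappa> (P x)\<bar> \<le> e/3" if x: "x \<in> {0..1}" for x
    proof -
      have "norm (\<kappa> (P x)) \<le> e/6" using dk(2)[of "P x"] P\<delta>[OF x] by (simp add: \<delta>P_def)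
      moreover have "\<bar>U x\<bar> \<le> e/6" using Ur x by (force simp: d_def)
      ultimately show ?thesis using abs_triangle_ineq4[of "U x" "\<kappa> (P x)"] by simp
    qed
    have fb: "norm (f (P x) (U x)) \<le> ef" if x: "x \<in> {0..1}" for x
    proof (rule fpair_bound[OF df(2)])
      have "\<bar>U x\<bar> \<le> df/2" using Ur x by (force simp: d_def)
      moreover have "norm (P x) \<le> df/2" using P\<delta>[OF x] by (simp add: \<delta>P_def)
      ultimately show "norm (P x) + \<bar>U x\<bar> \<le> df" by linarith
    qed
    have Wxb: "\<bar>Wx x\<bar> \<le> e/3" if x: "x \<in> {0..1}" for x
    proof -
      have "norm (\<kappa>d (P x)) * (G * norm (f (P x) (U x))) \<le> e/6"
        by (rule ef_calc[OF Kd00]) (use Kd0[of "P x"] P\<delta>[OF x] fb[OF x] e in \<open>auto simp: \<delta>P_def ef_def\<close>)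
      moreover have "\<bar>Ux x\<bar> \<le> e/6" using Uxr[OF x] by (simp add: d_def)
      ultimately show ?thesis using Wx_diff[OF x] by linarith
    qed
    have "supnorm01 (\<lambda>x. U x - \<kappa> (P x)) \<le> e/3" by (rule supnorm_le) (use Wb in auto)
    moreover have "supnorm01 Wx \<le> e/3" by (rule supnorm_le) (use Wxb in auto)
    moreover have "norm X0 \<le> e/6" using X0r by (simp add: d_def)
    ultimately show "norm X0 + supnorm01 (\<lambda>x. U x - \<kappa> (P x)) + supnorm01 Wx \<le> e" using e by linarith
  qed
qed

lemma \<beta>K: "class_K (\<lambda>r. \<beta> r 0)" using \<beta> unfolding class_KL_def by auto

lemma Ux_diff: "ft f v \<kappa> M vlow R R' \<alpha>1 \<alpha>2 \<alpha>3 \<kappa>d \<beta> \<gamma> U Ux Wx P X0 \<Longrightarrow> x \<in> {0..1} \<Longrightarrow>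
   \<bar>Ux x\<bar> \<le> \<bar>Wx x\<bar> + norm (\<kappa>d (P x)) * (G * norm (f (P x) (U x)))"
  using ft.Wx_diff by fastforce

lemma L4bnd: "\<exists>C. \<forall>U Ux Wx P X0. ft f v \<kappa> M vlow R R' \<alpha>1 \<alpha>2 \<alpha>3 \<kappa>d \<beta> \<gamma> U Ux Wx P X0 \<longrightarrow>
     norm X0 + supnorm01 (\<lambda>x. U x - \<kappa> (P x)) + supnorm01 Wx \<le> r \<longrightarrow>
     norm X0 + supnorm01 U + supnorm01 Ux \<le> C"
proof -
  define r' where "r' = max r 0"
  have r'0: "0 \<le> r'" by (simp add: r'_def)
  define \<rho> where "\<rho> = \<beta> r' 0 + \<gamma> r'"
  obtain Kk where Kk: "\<And>q. norm q \<le> \<rho> \<Longrightarrow> norm (\<kappa> q) \<le> Kk" using cont_bounded_cball[OF \<kappa>cont, of \<rho>] by blast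
  obtain Kd where Kd: "\<And>q. norm q \<le> \<rho> \<Longrightarrow> norm (\<kappa>d q) \<le> Kd" using cont_bounded_cball[OF \<kappa>dc, of \<rho>] by blast
  obtain Kf where Kf: "\<And>z. norm z \<le> \<rho> + (r' + Kk) \<Longrightarrow> norm ((\<lambda>(X,w). f X w) z) \<le> Kf"
    using cont_bounded_cball[OF fcont, of "\<rho> + (r' + Kk)"] by blast
  show ?thesis
  proof (intro exI allI impI)
    fix U Ux Wx P X0
    assume ftA: "ft f v \<kappa> M vlow R R' \<alpha>1 \<alpha>2 \<alpha>3 \<kappa>d \<beta> \<gamma> U Ux Wx P X0"
      and Ow: "norm X0 + supnorm01 (\<lambda>x. U x - \<kappa> (P x)) + supnorm01 Wx \<le> r"
    interpret ft f v \<kappa> M vlow R R' \<alpha>1 \<alpha>2 \<alpha>3 \<kappa>d \<beta> \<gamma> U Ux Wx P X0 by (rule ftA)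
    have X0r: "norm X0 \<le> r'" using Ow_parts(1) Ow by (simp add: r'_def)
    have Wr: "\<forall>x\<in>{0..1}. \<bar>U x - \<kappa> (P x)\<bar> \<le> r'" using Ow_parts(2) Ow by (force simp: r'_def)
    have Wxr: "\<And>x. x \<in> {0..1} \<Longrightarrow> \<bar>Wx x\<bar> \<le> r'" using Ow_parts(3) Ow by (force simp: r'_def)
    have P\<rho>: "norm (P x) \<le> \<rho>" if x: "x \<in> {0..1}" for x
    proof -
      have "norm (P x) \<le> \<beta> (norm X0) 0 + \<gamma> r'" by (rule ISS_bound[OF Wr x])
      also have "\<beta> (norm X0) 0 \<le> \<beta> r' 0" using K_mono[OF \<beta>K _ X0r] by simp
      finally show ?thesis by (simp add: \<rho>_def)
    qed
    have Ub: "\<bar>U x\<bar> \<le> r' + Kk" if x: "x \<in> {0..1}" for x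
    proof -
      have "\<bar>U x - \<kappa> (P x)\<bar> \<le> r'" using Wr x by blast
      moreover have "\<bar>\<kappa> (P x)\<bar> \<le> Kk" using Kk[OF P\<rho>[OF x]] by simp
      ultimately show ?thesis by linarith
    qed
    have fb: "norm (f (P x) (U x)) \<le> Kf" if x: "x \<in> {0..1}" for x
    proof (rule fpair_bound[OF Kf])
      show "norm (P x) + \<bar>U x\<bar> \<le> \<rho> + (r' + Kk)" using P\<rho>[OF x] Ub[OF x] by linarith
    qed
    have Uxb: "\<bar>Ux x\<bar> \<le> r' + Kd * (G * Kf)" if x: "x \<in> {0..1}" for x
    proof -
      have "norm (\<kappa>d (P x)) * (G * norm (f (P x) (U x))) \<le> Kd * (G * Kf)"
        by (rule kd_bound) (use Kd[OF P\<rho>[OF x]] fb[OF x] in auto)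
      then show ?thesis using Wx_diff[OF x] Wxr[OF x] by linarith
    qed
    have "supnorm01 U \<le> r' + Kk" by (rule supnorm_le) (use Ub in auto)
    moreover have "supnorm01 Ux \<le> r' + Kd * (G * Kf)" by (rule supnorm_le) (use Uxb in auto)
    ultimately show "norm X0 + supnorm01 U + supnorm01 Ux \<le> r' + (r' + Kk) + (r' + Kd * (G * Kf))"
      using X0r by linarith
  qed
qed

lemma L4small:
  assumes e: "e > 0"
  shows "\<exists>d>0. \<forall>U Ux Wx P X0. ft f v \<kappa> M vlow R R' \<alpha>1 \<alpha>2 \<alpha>3 \<kappa>d \<beta> \<gamma> U Ux Wx P X0 \<longrightarrow>
     norm X0 + supnorm01 (\<lambda>x. U x - \<kappa> (P x)) + supnorm01 Wx \<le> d \<longrightarrow>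
     norm X0 + supnorm01 U + supnorm01 Ux \<le> e"
proof -
  obtain Kd0 where Kd00: "Kd0 \<ge> 0" and Kd0: "\<And>q. norm q \<le> 1 \<Longrightarrow> norm (\<kappa>d q) \<le> Kd0"
    using cont_bounded_cball[OF \<kappa>dc, of 1] by blast
  define ef where "ef = e / (6 * (Kd0 + 1) * G)"
  have ef: "ef > 0" using e Kd00 G_pos by (simp add: ef_def)
  obtain df where df: "df > 0" "\<And>z. norm z \<le> df \<Longrightarrow> norm ((\<lambda>(X,w). f X w) z) \<le> ef"
    using cont_small0[OF fcont f0 ef] by blast
  define \<eta> where "\<eta> = min (e/6) (df/4)"
  have \<eta>: "\<eta> > 0" using e df by (simp add: \<eta>_def)
  obtain dk where dk: "dk > 0" "\<And>q. norm q \<le> dk \<Longrightarrow> norm (\<kappa> q) \<le> \<eta>"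
    using cont_small0[OF \<kappa>cont \<kappa>0 \<eta>] by auto
  define \<delta>P where "\<delta>P = min 1 (min dk (df/2))"
  have \<delta>P: "\<delta>P / 2 > 0" using dk df by (simp add: \<delta>P_def)
  obtain db where db: "db > 0" "\<And>x. 0 \<le> x \<Longrightarrow> x \<le> db \<Longrightarrow> \<beta> x 0 \<le> \<delta>P / 2"
    using K_small[OF \<beta>K \<delta>P] by blast
  obtain dg where dg: "dg > 0" "\<And>x. 0 \<le> x \<Longrightarrow> x \<le> dg \<Longrightarrow> \<gamma> x \<le> \<delta>P / 2"
    using K_small[OF \<gamma> \<delta>P] by blast
  define d where "d = min (min (e/6) (df/4)) (min db dg)"
  have d: "d > 0" using e df db dg by (simp add: d_def)
  show ?thesis
  proof (intro exI[of _ d] conjI allI impI d)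
    fix U Ux Wx P X0
    assume ftA: "ft f v \<kappa> M vlow R R' \<alpha>1 \<alpha>2 \<alpha>3 \<kappa>d \<beta> \<gamma> U Ux Wx P X0"
      and Ow: "norm X0 + supnorm01 (\<lambda>x. U x - \<kappa> (P x)) + supnorm01 Wx \<le> d"
    interpret ft f v \<kappa> M vlow R R' \<alpha>1 \<alpha>2 \<alpha>3 \<kappa>d \<beta> \<gamma> U Ux Wx P X0 by (rule ftA)
    have X0r: "norm X0 \<le> d" using Ow_parts(1) Ow by simp
    have Wr: "\<forall>x\<in>{0..1}. \<bar>U x - \<kappa> (P x)\<bar> \<le> d" using Ow_parts(2) Ow by force
    have Wxr: "\<And>x. x \<in> {0..1} \<Longrightarrow> \<bar>Wx x\<bar> \<le> d" using Ow_parts(3) Ow by force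
    have P\<delta>: "norm (P x) \<le> \<delta>P" if x: "x \<in> {0..1}" for x
    proof -
      have "norm (P x) \<le> \<beta> (norm X0) 0 + \<gamma> d" by (rule ISS_bound[OF Wr x])
      moreover have "\<beta> (norm X0) 0 \<le> \<delta>P / 2" using db(2)[of "norm X0"] X0r by (simp add: d_def)
      moreover have "\<gamma> d \<le> \<delta>P / 2" using dg(2)[of d] d by (simp add: d_def)
      ultimately show ?thesis by linarith
    qed
    have Ub: "\<bar>U x\<bar> \<le> d + \<eta>" if x: "x \<in> {0..1}" for x
    proof -
      have "\<bar>U x - \<kappa> (P x)\<bar> \<le> d" using Wr x by blast
      moreover have "\<bar>\<kappa> (P x)\<bar> \<le> \<eta>" using dk(2)[of "P x"] P\<delta>[OF x] by (simp add: \<delta>P_def)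
      ultimately show ?thesis by linarith
    qed
    have fb: "norm (f (P x) (U x)) \<le> ef" if x: "x \<in> {0..1}" for x
    proof (rule fpair_bound[OF df(2)])
      have "d + \<eta> \<le> df/2" by (simp add: d_def \<eta>_def)
      moreover have "norm (P x) \<le> df/2" using P\<delta>[OF x] by (simp add: \<delta>P_def)
      ultimately show "norm (P x) + \<bar>U x\<bar> \<le> df" using Ub[OF x] by linarith
    qed
    have Uxb: "\<bar>Ux x\<bar> \<le> e/3" if x: "x \<in> {0..1}" for x
    proof -
      have "norm (\<kappa>d (P x)) * (G * norm (f (P x) (U x))) \<le> e/6"
        by (rule ef_calc[OF Kd00]) (use Kd0[of "P x"] P\<delta>[OF x] fb[OF x] e in \<open>auto simp: \<delta>P_def ef_def\<close>)
      moreover have "\<bar>Wx x\<bar> \<le> e/6" using Wxr[OF x] by (simp add: d_def)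
      ultimately show ?thesis using Wx_diff[OF x] by linarith
    qed
    have "d + \<eta> \<le> e/3" by (simp add: d_def \<eta>_def)
    then have "supnorm01 U \<le> e/3" by (intro supnorm_le) (use Ub in force)
    moreover have "supnorm01 Ux \<le> e/3" by (rule supnorm_le) (use Uxb in auto)
    moreover have "norm X0 \<le> e/6" using X0r by (simp add: d_def)
    ultimately show "norm X0 + supnorm01 U + supnorm01 Ux \<le> e" using e by linarith
  qed
qed

end


lemma deriv_cont_UNIV:
  assumes "\<And>z. (g has_derivative g' z) (at z)"
  shows "continuous_on UNIV g"
proof -
  have "isCont g z" for z by (rule has_derivative_continuous[OF assms])
  then show ?thesis by (simp add: continuous_on_eq_continuous_at)
qed

lemma floclip_from_C1:
  fixes f :: "'a::euclidean_space \<Rightarrow> real \<Rightarrow> 'a"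
  assumes dF: "\<And>z. ((\<lambda>(X, w). f X w) has_derivative blinfun_apply (F' z)) (at z)"
    and F'c: "continuous_on UNIV F'"
  shows "\<exists>L. \<forall>x\<in>cball 0 r. \<forall>y\<in>cball 0 r. norm (f x c - f y c) \<le> L * norm (x - y)"
proof -
  have c1: "continuous_on UNIV (\<lambda>x::'a. F' (x, c))"
    by (rule continuous_on_compose2[OF F'c]) (auto intro!: continuous_intros)
  obtain K where K: "K \<ge> 0" "\<And>x. norm x \<le> r \<Longrightarrow> norm (F' (x, c)) \<le> K"
    using cont_bounded_cball[OF c1, of r] by blast
  have der: "((\<lambda>x. f x c) has_derivative (\<lambda>h. F' (x, c) (h, 0))) (at x within cball 0 r)" for x
  proof -
    have "((\<lambda>x::'a. (x, c)) has_derivative (\<lambda>h. (h, 0))) (at x)"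
      by (auto intro!: derivative_eq_intros)
    from diff_chain_at[OF this dF[of "(x, c)"]]
    have "(((\<lambda>(X, w). f X w) \<circ> (\<lambda>x. (x, c))) has_derivative (blinfun_apply (F' (x, c)) \<circ> (\<lambda>h. (h, 0)))) (at x)" .
    then have "((\<lambda>x. f x c) has_derivative (\<lambda>h. F' (x, c) (h, 0))) (at x)" by (simp add: o_def)
    then show ?thesis by (rule has_derivative_at_withinI)
  qed
  have on: "onorm (\<lambda>h. F' (x, c) (h, 0)) \<le> K" if "x \<in> cball 0 r" for x
  proof (rule onorm_le)
    fix h :: 'a
    have "norm (F' (x, c) (h, 0)) \<le> norm (F' (x, c)) * norm (h, 0::real)" by (rule norm_blinfun)
    also have "norm (h, 0::real) = norm h" by (simp add: norm_Pair)
    also have "norm (F' (x, c)) * norm h \<le> K * norm h"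
      using K(2)[of x] that by (intro mult_right_mono) auto
    finally show "norm (F' (x, c) (h, 0)) \<le> K * norm h" .
  qed
  show ?thesis
    by (intro exI[of _ K] ballI differentiable_bound[OF convex_cball der on]) auto
qed

lemma derive_setting:
  fixes f :: "'a::euclidean_space \<Rightarrow> real \<Rightarrow> 'a"
    and v :: "real \<Rightarrow> real"
    and \<kappa> :: "'a \<Rightarrow> real"
    and M :: real
  assumes f_C1: "C1_on UNIV (\<lambda>(X, w). f X w)"
    and f00: "f 0 0 = 0"
    and A1_smooth: "C2_on UNIV v"
    and A1_pos: "\<exists>vlow>0. \<forall>s. v s \<ge> vlow"
    and A2: "strongly_forward_complete f"
    and A3_smooth: "C2_on UNIV \<kappa>"
    and A3_zero: "\<kappa> 0 = 0"
    and A3_ISS: "ISS (\<lambda>X \<omega>. f X (\<kappa> X + \<omega>))"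
    and M_pos: "M > 0"
  shows "\<exists>vlow R R' \<alpha>1 \<alpha>2 \<alpha>3 \<kappa>d \<beta> \<gamma>. setting5 f v \<kappa> M vlow R R' \<alpha>1 \<alpha>2 \<alpha>3 \<kappa>d \<beta> \<gamma>"
proof -
  obtain F' where dF: "\<And>z. ((\<lambda>(X, w). f X w) has_derivative blinfun_apply (F' z)) (at z)"
    and F'c: "continuous_on UNIV F'"
    using f_C1 unfolding C1_on_def by blast
  have fcont: "continuous_on UNIV (\<lambda>(X, w). f X w)"
    by (rule deriv_cont_UNIV[OF dF])
  obtain v' where dv: "\<And>z. (v has_derivative blinfun_apply (v' z)) (at z)" and v'C1: "C1_on UNIV v'"
    using A1_smooth unfolding C2_on_def by blast
  obtain v'' where dv': "\<And>z. (v' has_derivative blinfun_apply (v'' z)) (at z)"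
    using v'C1 unfolding C1_on_def by blast
  have v'c: "continuous_on UNIV v'"
    by (rule deriv_cont_UNIV[OF dv'])
  have vcont: "continuous_on UNIV v"
    by (rule deriv_cont_UNIV[OF dv])
  have dvz: "deriv v z = v' z 1" for z
  proof -
    have "blinfun_apply (v' z) = (\<lambda>h. v' z 1 * h)"
    proof
      fix h :: real
      have "v' z h = v' z (h *\<^sub>R 1)" by simp
      also have "\<dots> = h *\<^sub>R v' z 1" by (rule blinfun.scaleR_right)
      finally show "v' z h = v' z 1 * h" by simp
    qed
    then have "(v has_real_derivative v' z 1) (at z)"
      using dv[of z] by (simp add: has_field_derivative_def)
    then show ?thesis by (rule DERIV_imp_deriv)
  qed
  have dvcont: "continuous_on UNIV (deriv v)"
  proof -
    have "continuous_on UNIV (\<lambda>z. v' z 1)" by (intro continuous_intros v'c)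
    then show ?thesis by (rule continuous_on_eq) (simp add: dvz)
  qed
  obtain vlow where vlow: "vlow > 0" "\<And>s. vlow \<le> v s" using A1_pos by blast
  obtain R R' \<alpha>1 \<alpha>2 \<alpha>3 where a: "class_K_inf \<alpha>1" "class_K_inf \<alpha>2" "class_K_inf \<alpha>3"
    and dR: "\<forall>X. (R has_derivative R' X) (at X)"
    and Rb: "\<forall>X. 0 \<le> R X \<and> \<alpha>1 (norm X) \<le> R X \<and> R X \<le> \<alpha>2 (norm X)"
    and Rf: "\<forall>X \<omega>. R' X (f X \<omega>) \<le> R X + \<alpha>3 \<bar>\<omega>\<bar>"
    using A2 unfolding strongly_forward_complete_def by blast
  obtain \<kappa>d where d\<kappa>: "\<And>z. (\<kappa> has_derivative blinfun_apply (\<kappa>d z)) (at z)" and \<kappa>dC1: "C1_on UNIV \<kappa>d"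
    using A3_smooth unfolding C2_on_def by blast
  obtain \<kappa>dd where d\<kappa>d: "\<And>z. (\<kappa>d has_derivative blinfun_apply (\<kappa>dd z)) (at z)"
    using \<kappa>dC1 unfolding C1_on_def by blast
  have \<kappa>dc: "continuous_on UNIV \<kappa>d"
    by (rule deriv_cont_UNIV[OF d\<kappa>d])
  obtain \<beta> \<gamma> where \<beta>: "class_KL \<beta>" and \<gamma>: "class_K \<gamma>"
    and iss: "\<forall>X \<omega>. continuous_on {0..} \<omega> \<longrightarrow>
        (\<forall>t\<ge>0. (X has_vector_derivative f (X t) (\<kappa> (X t) + \<omega> t)) (at t within {0..})) \<longrightarrow>
        (\<forall>t\<ge>0. norm (X t) \<le> \<beta> (norm (X 0)) t + \<gamma> (sup_on {0..t} \<omega>))"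
    using A3_ISS unfolding ISS_def by blast
  have "setting5 f v \<kappa> M vlow R R' \<alpha>1 \<alpha>2 \<alpha>3 \<kappa>d \<beta> \<gamma>"
  proof
    show "continuous_on UNIV (\<lambda>(X, w). f X w)" by (rule fcont)
    show "\<exists>L. \<forall>x\<in>cball 0 r. \<forall>y\<in>cball 0 r. norm (f x c - f y c) \<le> L * norm (x - y)" for r c
      by (rule floclip_from_C1[OF dF F'c])
    show "f 0 0 = 0" by (rule f00)
    show "vlow > 0" by (rule vlow(1))
    show "vlow \<le> v s" for s by (rule vlow(2))
    show "continuous_on UNIV v" by (rule vcont)
    show "continuous_on UNIV (deriv v)" by (rule dvcont)
    show "M > 0" by (rule M_pos)
    show "(R has_derivative R' x) (at x)" for x using dR by blast
    show "0 \<le> R x" for x using Rb by blast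
    show "\<alpha>1 (norm x) \<le> R x" for x using Rb by blast
    show "R x \<le> \<alpha>2 (norm x)" for x using Rb by blast
    show "R' X (f X \<omega>) \<le> R X + \<alpha>3 \<bar>\<omega>\<bar>" for X \<omega> using Rf by blast
    show "class_K_inf \<alpha>1" "class_K_inf \<alpha>2" "class_K_inf \<alpha>3" by (rule a)+
    show "(\<kappa> has_derivative blinfun_apply (\<kappa>d x)) (at x)" for x by (rule d\<kappa>)
    show "continuous_on UNIV \<kappa>d" by (rule \<kappa>dc)
    show "\<kappa> 0 = 0" by (rule A3_zero)
    show "class_KL \<beta>" by (rule \<beta>)
    show "class_K \<gamma>" by (rule \<gamma>)
    show "\<forall>t\<ge>0. norm (X t) \<le> \<beta> (norm (X 0)) t + \<gamma> (sup_on {0..t} \<omega>)"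
      if "continuous_on {0..} \<omega>" "\<forall>t\<ge>0. (X has_vector_derivative f (X t) (\<kappa> (X t) + \<omega> t)) (at t within {0..})"
      for X \<omega> using iss that by blast
  qed
  then show ?thesis by blast
qed

context setting5
begin

lemma sol_ft:
  assumes sol: "closed_loop_solution f v \<kappa> X u ux ut p"
    and rat: "\<forall>x\<in>{0..1}. \<forall>t\<ge>0. -M < deriv v (u x t) * ux x t / v (u x t)
                            \<and> deriv v (u x t) * ux x t / v (u x t) < 1"
    and dw: "\<forall>x\<in>{0..1}. \<forall>t\<ge>0.
          ((\<lambda>y. u y t - \<kappa> (p y t)) has_real_derivative wx x t) (at x within {0..1})"
    and t: "t \<ge> 0"
  shows "ft f v \<kappa> M vlow R R' \<alpha>1 \<alpha>2 \<alpha>3 \<kappa>d \<beta> \<gamma> (\<lambda>x. u x t) (\<lambda>x. ux x t) (\<lambda>x. wx x t) (\<lambda>x. p x t) (X t)"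
proof (rule ft.intro[OF setting5_axioms], rule ft_axioms.intro)
  have uc: "continuous_on Dom (\<lambda>(x, t). u x t)" and uxc: "continuous_on Dom (\<lambda>(x, t). ux x t)"
    using sol unfolding closed_loop_solution_def by blast+
  have cp: "continuous_on {0..1} (\<lambda>x::real. (x, t))" by (intro continuous_intros)
  have im: "(\<lambda>x::real. (x, t)) ` {0..1} \<subseteq> Dom" using t by (auto simp: Dom_def)
  show "continuous_on {0..1} (\<lambda>x. u x t)"
    using continuous_on_compose2[OF uc cp im] by simp
  show "continuous_on {0..1} (\<lambda>x. ux x t)"
    using continuous_on_compose2[OF uxc cp im] by simp
  show "((\<lambda>x. u x t) has_real_derivative ux x t) (at x within {0..1})" if "x \<in> {0..1}" for x
    using sol that t unfolding closed_loop_solution_def by blast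
  show "- M < deriv v (u x t) * ux x t / v (u x t) \<and> deriv v (u x t) * ux x t / v (u x t) < 1"
    if "x \<in> {0..1}" for x using rat that t by blast
  show "p x t = X t + integral {0..x} (\<lambda>y. Gamma v (u y t) (ux y t) y *\<^sub>R f (p y t) (u y t))"
    if "x \<in> {0..1}" for x using sol that t unfolding closed_loop_solution_def by blast
  show "((\<lambda>y. u y t - \<kappa> (p y t)) has_real_derivative wx x t) (at x within {0..1})"
    if "x \<in> {0..1}" for x using dw that t by blast
qed

end

theorem lemma5:
  fixes f :: "'a::euclidean_space \<Rightarrow> real \<Rightarrow> 'a"
    and v :: "real \<Rightarrow> real"
    and \<kappa> :: "'a \<Rightarrow> real"
    and M :: real
  assumes f_C1: "C1_on UNIV (\<lambda>(X, w). f X w)"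
    and f00: "f 0 0 = 0"
    and A1_smooth: "C2_on UNIV v"
    and A1_pos: "\<exists>vlow>0. \<forall>s. v s \<ge> vlow"
    and A2: "strongly_forward_complete f"
    and A3_smooth: "C2_on UNIV \<kappa>"
    and A3_zero: "\<kappa> 0 = 0"
    and A3_ISS: "ISS (\<lambda>X \<omega>. f X (\<kappa> X + \<omega>))"
    and M_pos: "M > 0"
  shows "\<exists>\<rho>3 \<rho>4. class_K_inf \<rho>3 \<and> class_K_inf \<rho>4 \<and>
    (\<forall>X u ux ut p wx.
       closed_loop_solution f v \<kappa> X u ux ut p \<longrightarrow>
       (\<forall>x\<in>{0..1}. \<forall>t\<ge>0. -M < deriv v (u x t) * ux x t / v (u x t)
                            \<and> deriv v (u x t) * ux x t / v (u x t) < 1) \<longrightarrow>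
       (\<forall>x\<in>{0..1}. \<forall>t\<ge>0.
          ((\<lambda>y. u y t - \<kappa> (p y t)) has_real_derivative wx x t) (at x within {0..1})) \<longrightarrow>
       (\<forall>t\<ge>0.
          norm (X t) + supnorm01 (\<lambda>x. u x t - \<kappa> (p x t)) + supnorm01 (\<lambda>x. wx x t)
            \<le> \<rho>3 (norm (X t) + supnorm01 (\<lambda>x. u x t) + supnorm01 (\<lambda>x. ux x t)) \<and>
          norm (X t) + supnorm01 (\<lambda>x. u x t) + supnorm01 (\<lambda>x. ux x t)
            \<le> \<rho>4 (norm (X t) + supnorm01 (\<lambda>x. u x t - \<kappa> (p x t)) + supnorm01 (\<lambda>x. wx x t))))"
proof -
  obtain vlow R R' \<alpha>1 \<alpha>2 \<alpha>3 \<kappa>d \<beta> \<gamma> where S: "setting5 f v \<kappa> M vlow R R' \<alpha>1 \<alpha>2 \<alpha>3 \<kappa>d \<beta> \<gamma>"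
    using derive_setting[OF assms] by blast
  interpret S: setting5 f v \<kappa> M vlow R R' \<alpha>1 \<alpha>2 \<alpha>3 \<kappa>d \<beta> \<gamma> by (rule S)
  define Sol where "Sol X u ux ut p wx \<longleftrightarrow> closed_loop_solution f v \<kappa> X u ux ut p \<and>
       (\<forall>x\<in>{0..1}. \<forall>t\<ge>0. -M < deriv v (u x t) * ux x t / v (u x t)
                            \<and> deriv v (u x t) * ux x t / v (u x t) < 1) \<and>
       (\<forall>x\<in>{0..1}. \<forall>t\<ge>0.
          ((\<lambda>y. u y t - \<kappa> (p y t)) has_real_derivative wx x t) (at x within {0..1}))"
    for X :: "real \<Rightarrow> 'a" and u ux ut :: "real \<Rightarrow> real \<Rightarrow> real" and p :: "real \<Rightarrow> real \<Rightarrow> 'a" and wx :: "real \<Rightarrow> real \<Rightarrow> real"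
  define FT where "FT U Ux Wx P X0 \<longleftrightarrow> ft f v \<kappa> M vlow R R' \<alpha>1 \<alpha>2 \<alpha>3 \<kappa>d \<beta> \<gamma> U Ux Wx P X0"
    for U Ux Wx :: "real \<Rightarrow> real" and P :: "real \<Rightarrow> 'a" and X0
  define P3 where "P3 a b \<longleftrightarrow> (\<exists>U Ux Wx P X0. FT U Ux Wx P X0 \<and>
       a = norm X0 + supnorm01 U + supnorm01 Ux \<and> b = norm X0 + supnorm01 (\<lambda>x. U x - \<kappa> (P x)) + supnorm01 Wx)" for a b
  define P4 where "P4 a b \<longleftrightarrow> (\<exists>U Ux Wx P X0. FT U Ux Wx P X0 \<and>
       b = norm X0 + supnorm01 U + supnorm01 Ux \<and> a = norm X0 + supnorm01 (\<lambda>x. U x - \<kappa> (P x)) + supnorm01 Wx)" for a b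
  obtain \<rho>3 where \<rho>3: "class_K_inf \<rho>3" "\<forall>a b. P3 a b \<longrightarrow> b \<le> \<rho>3 a"
  proof -
    have "\<exists>\<rho>. class_K_inf \<rho> \<and> (\<forall>a b. P3 a b \<longrightarrow> b \<le> \<rho> a)"
    proof (rule Kinf_major_rel)
      show "0 \<le> a" if "P3 a b" for a b
        using that ft.Om_parts(4) unfolding P3_def FT_def by blast
      show "\<exists>C. \<forall>a b. P3 a b \<longrightarrow> a \<le> r \<longrightarrow> b \<le> C" for r
        using S.L3bnd[of r] unfolding P3_def FT_def by blast
      show "\<exists>d>0. \<forall>a b. P3 a b \<longrightarrow> a \<le> d \<longrightarrow> b \<le> e" if "e > 0" for e
        using S.L3small[OF that] unfolding P3_def FT_def by blast
    qed
    then show ?thesis using that by blast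
  qed
  obtain \<rho>4 where \<rho>4: "class_K_inf \<rho>4" "\<forall>a b. P4 a b \<longrightarrow> b \<le> \<rho>4 a"
  proof -
    have "\<exists>\<rho>. class_K_inf \<rho> \<and> (\<forall>a b. P4 a b \<longrightarrow> b \<le> \<rho> a)"
    proof (rule Kinf_major_rel)
      show "0 \<le> a" if "P4 a b" for a b
        using that ft.Ow_parts(4) unfolding P4_def FT_def by blast
      show "\<exists>C. \<forall>a b. P4 a b \<longrightarrow> a \<le> r \<longrightarrow> b \<le> C" for r
        using S.L4bnd[of r] unfolding P4_def FT_def by blast
      show "\<exists>d>0. \<forall>a b. P4 a b \<longrightarrow> a \<le> d \<longrightarrow> b \<le> e" if "e > 0" for e
        using S.L4small[OF that] unfolding P4_def FT_def by blast
    qed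
    then show ?thesis using that by blast
  qed
  have main: "norm (X t) + supnorm01 (\<lambda>x. u x t - \<kappa> (p x t)) + supnorm01 (\<lambda>x. wx x t)
            \<le> \<rho>3 (norm (X t) + supnorm01 (\<lambda>x. u x t) + supnorm01 (\<lambda>x. ux x t)) \<and>
          norm (X t) + supnorm01 (\<lambda>x. u x t) + supnorm01 (\<lambda>x. ux x t)
            \<le> \<rho>4 (norm (X t) + supnorm01 (\<lambda>x. u x t - \<kappa> (p x t)) + supnorm01 (\<lambda>x. wx x t))"
    if sol: "closed_loop_solution f v \<kappa> X u ux ut p"
      and rat: "\<forall>x\<in>{0..1}. \<forall>t\<ge>0. -M < deriv v (u x t) * ux x t / v (u x t)
                            \<and> deriv v (u x t) * ux x t / v (u x t) < 1"
      and dw: "\<forall>x\<in>{0..1}. \<forall>t\<ge>0.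
          ((\<lambda>y. u y t - \<kappa> (p y t)) has_real_derivative wx x t) (at x within {0..1})"
      and t: "0 \<le> t"
    for X u ux ut p wx and t :: real
  proof
    have ftI: "FT (\<lambda>x. u x t) (\<lambda>x. ux x t) (\<lambda>x. wx x t) (\<lambda>x. p x t) (X t)"
      unfolding FT_def by (rule S.sol_ft[OF sol rat dw t])
    have "P3 (norm (X t) + supnorm01 (\<lambda>x. u x t) + supnorm01 (\<lambda>x. ux x t))
             (norm (X t) + supnorm01 (\<lambda>x. u x t - \<kappa> (p x t)) + supnorm01 (\<lambda>x. wx x t))"
      unfolding P3_def using ftI by blast
    then show "norm (X t) + supnorm01 (\<lambda>x. u x t - \<kappa> (p x t)) + supnorm01 (\<lambda>x. wx x t)
            \<le> \<rho>3 (norm (X t) + supnorm01 (\<lambda>x. u x t) + supnorm01 (\<lambda>x. ux x t))"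
      using \<rho>3(2) by blast
    have "P4 (norm (X t) + supnorm01 (\<lambda>x. u x t - \<kappa> (p x t)) + supnorm01 (\<lambda>x. wx x t))
             (norm (X t) + supnorm01 (\<lambda>x. u x t) + supnorm01 (\<lambda>x. ux x t))"
      unfolding P4_def using ftI by blast
    then show "norm (X t) + supnorm01 (\<lambda>x. u x t) + supnorm01 (\<lambda>x. ux x t)
            \<le> \<rho>4 (norm (X t) + supnorm01 (\<lambda>x. u x t - \<kappa> (p x t)) + supnorm01 (\<lambda>x. wx x t))"
      using \<rho>4(2) by blast
  qed
  show ?thesis
    by (rule exI[of _ \<rho>3], rule exI[of _ \<rho>4]) (use \<rho>3(1) \<rho>4(1) main in blast)
qed


end
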